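(* For every $f\in H^1_0(D)$, the nonlinear operator $A_f:\mathcal V\to\mathcal V^*$ satisfies: (1) $A_f$ is monotone in the sense ${}_{\mathcal V^*}\langle A_f(h_1)-A_f(h_2),h_1-h_2\rangle_{\mathcal V}\le0$ for all $h_1,h_2\in\mathcal V$; (2) $A_f$ is demicontinuous, i.e. $h\mapsto A_f(h)$ is continuous from $\mathcal V$ into $\mathcal V^*$ endowed with its weak topology; (3) there exist constants $C_1,C_2,C_3>0$ such that for all $h\in\mathcal V$, $${}_{\mathcal V^*}\langle A_f(h),h\rangle_{\mathcal V}\le -C_1\|h\|_{\mathcal V}^2+C_2,\qquad \|A_f(h)\|_{\mathcal V^*}\le C_3(\|h\|_{\mathcal V}+1).$$
   Context: $D\subset\mathbb{R}^d$ is a bounded connected domain with Lipschitz boundary. $V:\mathbb{R}\to\mathbb{R}$ is $C^2$, even, with $c_-\le V''\le c_+$ for constants $c_\pm>0$. $\sigma:\mathbb{R}^d\to\mathbb{R}$ is the surface tension associated with $V$: with $\Gamma_N=(\mathbb{Z}/N\mathbb{Z})^d$, $Z_N(u)=\int\exp(-\sum_{x\in\Gamma_N}\sum_{i=1}^dV(\phi(x+e_i)-\phi(x)+u_i))\prod_{x\ne0}d\phi(x)$ with $\phi(0)=0$, and $\sigma(u)=-\lim_{N\to\infty}N^{-d}\log(Z_N(u)/Z_N(0))$. It is known that $\sigma\in C^1$ and $c_-|u-v|^2\le(\nabla\sigma(u)-\nabla\sigma(v))\cdot(u-v)\le c_+|u-v|^2$ for all $u,v$. Let $\langle\cdot,\cdot\rangle$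 be the $H^1(D)^*$–$H^1(D)$ duality extending the $L^2(D)$ inner product. $\mathcal H=\{h\in H^1(D)^*;\langle h,1\rangle=0\}$ with inner product $(h_1,h_2)_{\mathcal H}=(\nabla Gh_1,\nabla Gh_2)_{L^2(D)}$, where $Gh\in H^1(D)$ is the unique $g$ with $\int_Dg=0$ and $(\nabla g,\nabla J)_{L^2(D)}=\langle h,J\rangle$ for all $J\in H^1(D)$. $\mathcal V=\{h\in H^1_0(D);\int_Dh=0\}$ (a closed subspace of $H^1_0(D)$ with its norm), with dual $\mathcal V^*$; triple $\mathcal V\subset\mathcal H\subset\mathcal V^*$ with ${}_{\mathcal V^*}\langle f,g\rangle_{\mathcal V}=(f,g)_{\mathcal H}$ for $f\in\mathcal H$. For $f\in H^1_0(D)$, $A_f:\mathcal V\to\mathcal V^*$ is $A_f(h)=-\Delta\,\mathrm{div}((\nabla\sigma)(\nabla h+\nabla f))$, meaning ${}_{\mathcal V^*}\langle A_f(h),g\rangle_{\mathcal V}=-((\nabla\sigma)(\nabla h+\nabla f),\nabla g)_{L^2(D)}$ for $h,g\in\mathcal V$. *)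

theory Defs
  imports "HOL-Analysis.Analysis"
begin

definition GamN :: "nat \<Rightarrow> ('n::finite \<Rightarrow> nat) set" where
  "GamN N = {x. \<forall>i. x i < N}"

definition shiftN :: "nat \<Rightarrow> 'n::finite \<Rightarrow> ('n \<Rightarrow> nat) \<Rightarrow> ('n \<Rightarrow> nat)" where
  "shiftN N i x = x(i := (x i + 1) mod N)"

text \<open>Partition function Z_N(u); phi is pinned by phi(0) = 0 and integrated over
  the remaining sites with Lebesgue measure.\<close>
definition ZN :: "(real \<Rightarrow> real) \<Rightarrow> nat \<Rightarrow> real^'n::finite \<Rightarrow> real" where
  "ZN V N u = (\<integral>\<phi>. exp (- (\<Sum>x\<in>GamN N. \<Sum>i\<in>UNIV.
        V ((\<phi>((\<lambda>_. 0) := 0)) (shiftN N i x) - (\<phi>((\<lambda>_. 0) := 0)) x + u $ i)))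
      \<partial>(PiM (GamN N - {\<lambda>_. 0}) (\<lambda>_. lborel)))"

definition surface_tension :: "(real \<Rightarrow> real) \<Rightarrow> real^'n::finite \<Rightarrow> real" where
  "surface_tension V u =
     - lim (\<lambda>N. ln (ZN V N u / ZN V N (0::real^'n)) / real N ^ CARD('n))"

definition partial :: "'n::finite \<Rightarrow> (real^'n \<Rightarrow> real) \<Rightarrow> real^'n \<Rightarrow> real" where
  "partial i f x = frechet_derivative f (at x) (axis i 1)"

definition vgrad :: "(real^'n::finite \<Rightarrow> real) \<Rightarrow> real^'n \<Rightarrow> real^'n" where
  "vgrad f x = (\<chi> i. partial i f x)"

fun iter_partial :: "'n::finite list \<Rightarrow> (real^'n \<Rightarrow> real) \<Rightarrow> real^'n \<Rightarrow> real" where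
  "iter_partial [] f = f"
| "iter_partial (i # is) f = partial i (iter_partial is f)"

definition smooth :: "(real^'n::finite \<Rightarrow> real) \<Rightarrow> bool" where
  "smooth f \<longleftrightarrow> (\<forall>is x. iter_partial is f differentiable (at x))"

definition test_fun :: "(real^'n::finite) set \<Rightarrow> (real^'n \<Rightarrow> real) \<Rightarrow> bool" where
  "test_fun D \<phi> \<longleftrightarrow> smooth \<phi> \<and> compact (closure {x. \<phi> x \<noteq> 0})
      \<and> closure {x. \<phi> x \<noteq> 0} \<subseteq> D"

definition lipschitz_boundary :: "(real^'n::finite) set \<Rightarrow> bool" where
  "lipschitz_boundary D \<longleftrightarrow> (\<forall>x\<in>frontier D. \<exists>r>0. \<exists>Q::real^'n^'n. \<exists>k. \<exists>\<gamma>::real^'n \<Rightarrow> real.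
      orthogonal_matrix Q \<and> (\<exists>L. L-lipschitz_on UNIV \<gamma>)
      \<and> (\<forall>z t. \<gamma> (z + t *\<^sub>R axis k 1) = \<gamma> z)
      \<and> D \<inter> ball x r = {y \<in> ball x r. (Q *v (y - x)) $ k < \<gamma> (Q *v (y - x))})"

text \<open>h0_grad D h G: h lies in H^1_0(D) (closure of test functions in the H^1 norm)
  and G is its weak gradient (on D).\<close>
definition h0_grad :: "(real^'n::finite) set \<Rightarrow> (real^'n \<Rightarrow> real) \<Rightarrow> (real^'n \<Rightarrow> real^'n) \<Rightarrow> bool" where
  "h0_grad D h G \<longleftrightarrow>
     set_borel_measurable lebesgue D h \<and> set_integrable lebesgue D (\<lambda>x. (h x)\<^sup>2)
   \<and> set_borel_measurable lebesgue D G \<and> set_integrable lebesgue D (\<lambda>x. (norm (G x))\<^sup>2)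
   \<and> (\<exists>\<phi>::nat \<Rightarrow> real^'n \<Rightarrow> real. (\<forall>n. test_fun D (\<phi> n))
        \<and> (\<lambda>n. LINT x:D|lebesgue. (\<phi> n x - h x)\<^sup>2) \<longlonglongrightarrow> 0
        \<and> (\<lambda>n. LINT x:D|lebesgue. (norm (vgrad (\<phi> n) x - G x))\<^sup>2) \<longlonglongrightarrow> 0)"

definition H10 :: "(real^'n::finite) set \<Rightarrow> (real^'n \<Rightarrow> real) \<Rightarrow> bool" where
  "H10 D h \<longleftrightarrow> (\<exists>G. h0_grad D h G)"

text \<open>Weak gradient (determined a.e. on D; only used inside integrals over D).\<close>
definition wgrad :: "(real^'n::finite) set \<Rightarrow> (real^'n \<Rightarrow> real) \<Rightarrow> real^'n \<Rightarrow> real^'n" where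
  "wgrad D h = (SOME G. h0_grad D h G)"

definition normV :: "(real^'n::finite) set \<Rightarrow> (real^'n \<Rightarrow> real) \<Rightarrow> real" where
  "normV D h = sqrt ((LINT x:D|lebesgue. (h x)\<^sup>2) + (LINT x:D|lebesgue. (norm (wgrad D h x))\<^sup>2))"

definition Vsp :: "(real^'n::finite) set \<Rightarrow> (real^'n \<Rightarrow> real) set" where
  "Vsp D = {h. H10 D h \<and> (LINT x:D|lebesgue. h x) = 0}"

text \<open>The duality pairing  V*< A_f(h), g >V = -((grad sigma)(grad h + grad f), grad g)_{L^2(D)}.\<close>
definition Apair :: "(real^'n::finite) set \<Rightarrow> (real^'n \<Rightarrow> real) \<Rightarrow> (real^'n \<Rightarrow> real)
    \<Rightarrow> (real^'n \<Rightarrow> real) \<Rightarrow> (real^'n \<Rightarrow> real) \<Rightarrow> real" where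
  "Apair D \<sigma> f h g =
     - (LINT x:D|lebesgue. vgrad \<sigma> (wgrad D h x + wgrad D f x) \<bullet> wgrad D g x)"

end

theory Submission
  imports Defs
begin

lemma frechet_vgrad:
  fixes f :: "real^'n::finite \<Rightarrow> real"
  assumes "f differentiable (at x)"
  shows "(f has_derivative (\<lambda>w. vgrad f x \<bullet> w)) (at x)"
proof -
  let ?F = "frechet_derivative f (at x)"
  have d: "(f has_derivative ?F) (at x)" using assms frechet_derivative_works by blast
  have lin: "linear ?F" using d has_derivative_linear by blast
  have eq: "?F w = vgrad f x \<bullet> w" for w
  proof -
    have "?F w = ?F (\<Sum>i\<in>UNIV. w$i *\<^sub>R axis i 1)"
      using basis_expansion[of w] by (simp add: scalar_mult_eq_scaleR)
    also have "\<dots> = (\<Sum>i\<in>UNIV. w$i * ?F (axis i 1))"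
      using lin by (simp add: linear_sum linear_scale)
    also have "\<dots> = vgrad f x \<bullet> w"
      by (simp add: inner_vec_def vgrad_def partial_def mult.commute)
    finally show ?thesis .
  qed
  have "?F = (\<lambda>w. vgrad f x \<bullet> w)" using eq by auto
  then show ?thesis using d by simp
qed

lemma vgrad_axis: "vgrad f x \<bullet> axis i 1 = partial i f x"
  by (simp add: vgrad_def inner_axis)

lemma line_deriv:
  fixes f :: "real^'n::finite \<Rightarrow> real"
  assumes "f differentiable (at (x + t *\<^sub>R e))"
  shows "((\<lambda>s. f (x + s *\<^sub>R e)) has_real_derivative (vgrad f (x + t *\<^sub>R e) \<bullet> e)) (at t)"
proof -
  have i: "((\<lambda>s. x + s *\<^sub>R e) has_derivative (\<lambda>h. h *\<^sub>R e)) (at t)"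
    by (auto intro!: derivative_eq_intros)
  have "((\<lambda>s. f (x + s *\<^sub>R e)) has_derivative (\<lambda>h. vgrad f (x + t *\<^sub>R e) \<bullet> (h *\<^sub>R e))) (at t)"
    using has_derivative_compose[OF i frechet_vgrad[OF assms]] by simp
  moreover have "(\<lambda>h. vgrad f (x + t *\<^sub>R e) \<bullet> (h *\<^sub>R e)) = (*) (vgrad f (x + t *\<^sub>R e) \<bullet> e)"
    by (auto simp: inner_scaleR_right)
  ultimately show ?thesis by (simp add: has_field_derivative_def)
qed

locale sig_ass =
  fixes \<sigma> :: "real^'n::finite \<Rightarrow> real" and cm cp :: real
  assumes dif: "\<forall>u. \<sigma> differentiable (at u)"
   and cp: "cp > 0"
   and mon: "\<forall>u v. cm * (norm (u - v))\<^sup>2 \<le> (vgrad \<sigma> u - vgrad \<sigma> v) \<bullet> (u - v)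
           \<and> (vgrad \<sigma> u - vgrad \<sigma> v) \<bullet> (u - v) \<le> cp * (norm (u - v))\<^sup>2"
   and cm: "cm > 0"
begin

abbreviation "F \<equiv> vgrad \<sigma>"

lemma mvt_step:
  fixes x y :: "real^'n"
  assumes "x \<noteq> y"
  obtains \<xi> where "0 < \<xi>" "\<xi> < 1" "\<sigma> y - \<sigma> x = F (x + \<xi> *\<^sub>R (y - x)) \<bullet> (y - x)"
proof -
  have "\<And>s. 0 \<le> s \<Longrightarrow> s \<le> 1 \<Longrightarrow> ((\<lambda>s. \<sigma> (x + s *\<^sub>R (y - x))) has_real_derivative
      (F (x + s *\<^sub>R (y - x)) \<bullet> (y - x))) (at s)"
    using line_deriv dif by blast
  from MVT2[of 0 1, OF _ this] obtain z where "0 < z" "z < 1"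
    "\<sigma> (x + 1 *\<^sub>R (y - x)) - \<sigma> (x + 0 *\<^sub>R (y - x)) = (1 - 0) * (F (x + z *\<^sub>R (y - x)) \<bullet> (y - x))"
    by auto
  then show ?thesis using that by simp
qed

lemma upper: "\<sigma> y \<le> \<sigma> x + F x \<bullet> (y - x) + cp * (norm (y - x))\<^sup>2"
proof (cases "x = y")
  case True then show ?thesis by simp
next
  case False
  then obtain \<xi> where xi: "0 < \<xi>" "\<xi> < 1" "\<sigma> y - \<sigma> x = F (x + \<xi> *\<^sub>R (y - x)) \<bullet> (y - x)"
    using mvt_step by blast
  let ?d = "y - x"
  have "(F (x + \<xi> *\<^sub>R ?d) - F x) \<bullet> ((x + \<xi> *\<^sub>R ?d) - x) \<le> cp * (norm ((x + \<xi> *\<^sub>R ?d) - x))\<^sup>2"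
    using mon by blast
  then have "\<xi> * ((F (x + \<xi> *\<^sub>R ?d) - F x) \<bullet> ?d) \<le> \<xi> * (\<xi> * cp * (norm ?d)\<^sup>2)"
    using xi by (simp add: inner_scaleR_right power2_eq_square mult_ac)
  then have "(F (x + \<xi> *\<^sub>R ?d) - F x) \<bullet> ?d \<le> \<xi> * cp * (norm ?d)\<^sup>2"
    using xi by simp
  also have "\<dots> \<le> cp * (norm ?d)\<^sup>2" using xi cp by (simp add: mult_left_le_one_le)
  finally show ?thesis using xi by (simp add: inner_diff_left)
qed

lemma lower: "\<sigma> x + F x \<bullet> (y - x) \<le> \<sigma> y"
proof (cases "x = y")
  case True then show ?thesis by simp
next
  case False
  then obtain \<xi> where xi: "0 < \<xi>" "\<xi> < 1" "\<sigma> y - \<sigma> x = F (x + \<xi> *\<^sub>R (y - x)) \<bullet> (y - x)"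
    using mvt_step by blast
  let ?d = "y - x"
  have "cm * (norm ((x + \<xi> *\<^sub>R ?d) - x))\<^sup>2 \<le> (F (x + \<xi> *\<^sub>R ?d) - F x) \<bullet> ((x + \<xi> *\<^sub>R ?d) - x)"
    using mon by blast
  moreover have "0 \<le> cm * (norm ((x + \<xi> *\<^sub>R ?d) - x))\<^sup>2" using cm by simp
  ultimately have "0 \<le> \<xi> * ((F (x + \<xi> *\<^sub>R ?d) - F x) \<bullet> ?d)"
    by (simp add: inner_scaleR_right)
  then have "0 \<le> (F (x + \<xi> *\<^sub>R ?d) - F x) \<bullet> ?d"
    using xi by (simp add: zero_le_mult_iff)
  then show ?thesis using xi by (simp add: inner_diff_left)
qed

lemma cocoer: "(norm (F y - F x))\<^sup>2 / (4 * cp) \<le> \<sigma> y - \<sigma> x - F x \<bullet> (y - x)"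
proof -
  define g where "g = F y - F x"
  define z where "z = y - (1 / (2 * cp)) *\<^sub>R g"
  have "\<sigma> x + F x \<bullet> (z - x) \<le> \<sigma> z" by (rule lower)
  also have "\<sigma> z \<le> \<sigma> y + F y \<bullet> (z - y) + cp * (norm (z - y))\<^sup>2" by (rule upper)
  finally have h: "\<sigma> x + F x \<bullet> (z - x) \<le> \<sigma> y + F y \<bullet> (z - y) + cp * (norm (z - y))\<^sup>2" .
  have "F y \<bullet> (z - y) - F x \<bullet> (z - x) = - (F x \<bullet> (y - x)) + g \<bullet> (z - y)"
    by (simp add: g_def inner_diff_left inner_diff_right)
  moreover have "g \<bullet> (z - y) = - (norm g)\<^sup>2 / (2 * cp)"
    by (simp add: z_def power2_norm_eq_inner)
  moreover have "cp * (norm (z - y))\<^sup>2 = (norm g)\<^sup>2 / (4 * cp)"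
    using cp by (simp add: z_def power2_eq_square field_simps)
  ultimately have "(norm g)\<^sup>2 / (2 * cp) - (norm g)\<^sup>2 / (4 * cp) \<le> \<sigma> y - \<sigma> x - F x \<bullet> (y - x)"
    using h by linarith
  moreover have "(norm g)\<^sup>2 / (2 * cp) - (norm g)\<^sup>2 / (4 * cp) = (norm g)\<^sup>2 / (4 * cp)"
    using cp by (simp add: field_simps)
  ultimately show ?thesis by (simp add: g_def)
qed

lemma lip: "norm (F u - F v) \<le> 2 * cp * norm (u - v)"
proof -
  have a: "(norm (F u - F v))\<^sup>2 / (4 * cp) \<le> \<sigma> u - \<sigma> v - F v \<bullet> (u - v)" by (rule cocoer)
  have b: "(norm (F v - F u))\<^sup>2 / (4 * cp) \<le> \<sigma> v - \<sigma> u - F u \<bullet> (v - u)" by (rule cocoer)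
  have "norm (F v - F u) = norm (F u - F v)" by (rule norm_minus_commute)
  with a b have "(norm (F u - F v))\<^sup>2 / (2 * cp) \<le> (F u - F v) \<bullet> (u - v)"
    by (simp add: inner_diff_left inner_diff_right inner_commute field_simps)
  also have "\<dots> \<le> norm (F u - F v) * norm (u - v)" by (rule Cauchy_Schwarz_ineq2[THEN order_trans[OF abs_ge_self]])
  finally have "(norm (F u - F v))\<^sup>2 \<le> 2 * cp * (norm (F u - F v) * norm (u - v))"
    using cp by (simp add: field_simps)
  then show ?thesis
    using cp by (cases "norm (F u - F v) = 0") (auto simp: power2_eq_square)
qed

end

lemma real_cs_aux:
  fixes A B X :: real
  assumes "A \<ge> 0" "B \<ge> 0" "\<And>s. s > 0 \<Longrightarrow> X \<le> (s * A + B / s) / 2"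
  shows "X \<le> sqrt A * sqrt B"
proof (cases "A > 0 \<and> B > 0")
  case True
  define a where "a = sqrt A"
  define b where "b = sqrt B"
  have a: "a > 0" "A = a\<^sup>2" using True assms by (auto simp: a_def)
  have b: "b > 0" "B = b\<^sup>2" using True assms by (auto simp: b_def)
  have h: "X \<le> ((b / a) * A + B / (b / a)) / 2" by (rule assms(3)) (use a b in simp)
  have 1: "(b / a) * A = a * b" using a by (simp add: power2_eq_square)
  have 2: "B / (b / a) = a * b" using b a by (simp add: power2_eq_square)
  from h have "X \<le> (a * b + a * b) / 2" by (simp only: 1 2)
  then show ?thesis by (simp add: a_def b_def)
next
  case False
  then have z: "A = 0 \<or> B = 0" using assms by auto
  show ?thesis
  proof (rule ccontr)
    assume "\<not> ?thesis"
    then have X: "X > 0" using z by auto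
    show False
    proof (cases "A = 0")
      case True
      have "X \<le> (B / (B / X + 1)) / 2" using assms(3)[of "B / X + 1"] True assms(2) X
        by (simp add: add_nonneg_pos)
      moreover have "B / (B / X + 1) < X + X"
      proof -
        have "(X + X) * (B / X + 1) = B + B + X + X" using X by (simp add: field_simps)
        then have "B < (X + X) * (B / X + 1)" using X assms(2) by simp
        then show ?thesis using X assms(2) by (simp add: divide_less_eq add_nonneg_pos)
      qed
      moreover have "\<And>Y::real. X \<le> Y / 2 \<Longrightarrow> Y < X + X \<Longrightarrow> False" by linarith
      ultimately show False by blast
    next
      case False
      then have B: "B = 0" using z by simp
      have "X \<le> (X / (A + 1) * A) / 2" using assms(3)[of "X / (A + 1)"] B assms(1) X by simp
      moreover have "X / (A + 1) * A < X + X"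
      proof -
        have "(X + X) * (A + 1) = X * A + X * A + X + X" by (simp add: field_simps)
        moreover have "0 \<le> X * A" using X assms(1) by simp
        ultimately have "X * A < (X + X) * (A + 1)" using X by linarith
        then show ?thesis using assms(1) by (simp add: field_simps)
      qed
      moreover have "\<And>Y::real. X \<le> Y / 2 \<Longrightarrow> Y < X + X \<Longrightarrow> False" by linarith
      ultimately show False by blast
    qed
  qed
qed

lemma int_mono_nn:
  fixes f g :: "'a \<Rightarrow> real"
  assumes "integrable M g" "\<And>x. x \<in> space M \<Longrightarrow> 0 \<le> f x" "\<And>x. x \<in> space M \<Longrightarrow> f x \<le> g x"
  shows "integral\<^sup>L M f \<le> integral\<^sup>L M g"
proof (cases "integrable M f")
  case True then show ?thesis using assms integral_mono by blast
next
  case False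
  then have "integral\<^sup>L M f = 0" by (rule not_integrable_integral_eq)
  moreover have "0 \<le> integral\<^sup>L M g" by (intro integral_nonneg_AE AE_I2) (meson assms order_trans)
  ultimately show ?thesis by simp
qed

lemma sq_le2: "(a - b)\<^sup>2 \<le> 2 * a\<^sup>2 + 2 * (b::real)\<^sup>2"
proof -
  have "2 * a\<^sup>2 + 2 * b\<^sup>2 - (a - b)\<^sup>2 = (a + b)\<^sup>2" by (simp add: power2_eq_square algebra_simps)
  moreover have "0 \<le> (a + b)\<^sup>2" by simp
  ultimately show ?thesis by linarith
qed

lemma sq_le2v: "(norm (x - y))\<^sup>2 \<le> 2 * (norm x)\<^sup>2 + 2 * (norm (y::'a::real_normed_vector))\<^sup>2"
proof -
  have "norm (x - y) \<le> norm x + norm y" by (rule norm_triangle_ineq4)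
  then have "(norm (x - y))\<^sup>2 \<le> (norm x + norm y)\<^sup>2" by (simp add: power_mono)
  also have "\<dots> \<le> 2 * (norm x)\<^sup>2 + 2 * (norm y)\<^sup>2" using sq_le2[of "norm x" "- norm y"] by simp
  finally show ?thesis .
qed

lemma sq_int_diffv:
  fixes f g :: "'a \<Rightarrow> 'b::euclidean_space"
  assumes [measurable]: "f \<in> borel_measurable M" "g \<in> borel_measurable M"
   and "integrable M (\<lambda>x. (norm (f x))\<^sup>2)" "integrable M (\<lambda>x. (norm (g x))\<^sup>2)"
  shows "integrable M (\<lambda>x. (norm (f x - g x))\<^sup>2)"
proof (rule Bochner_Integration.integrable_bound[of _ "\<lambda>x. 2 * (norm (f x))\<^sup>2 + 2 * (norm (g x))\<^sup>2"])
  show "integrable M (\<lambda>x. 2 * (norm (f x))\<^sup>2 + 2 * (norm (g x))\<^sup>2)" using assms by auto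
  show "(\<lambda>x. (norm (f x - g x))\<^sup>2) \<in> borel_measurable M" by measurable
  show "AE x in M. norm ((norm (f x - g x))\<^sup>2) \<le> norm (2 * (norm (f x))\<^sup>2 + 2 * (norm (g x))\<^sup>2)"
    using sq_le2v by (auto intro!: AE_I2)
qed

lemma sq_int_diff:
  fixes f g :: "'a \<Rightarrow> real"
  assumes [measurable]: "f \<in> borel_measurable M" "g \<in> borel_measurable M"
   and "integrable M (\<lambda>x. (f x)\<^sup>2)" "integrable M (\<lambda>x. (g x)\<^sup>2)"
  shows "integrable M (\<lambda>x. (f x - g x)\<^sup>2)"
proof (rule Bochner_Integration.integrable_bound[of _ "\<lambda>x. 2 * (f x)\<^sup>2 + 2 * (g x)\<^sup>2"])
  show "integrable M (\<lambda>x. 2 * (f x)\<^sup>2 + 2 * (g x)\<^sup>2)" using assms by auto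
  show "(\<lambda>x. (f x - g x)\<^sup>2) \<in> borel_measurable M" by measurable
  show "AE x in M. norm ((f x - g x)\<^sup>2) \<le> norm (2 * (f x)\<^sup>2 + 2 * (g x)\<^sup>2)"
    using sq_le2 by (auto intro!: AE_I2)
qed

lemma l2_cs:
  fixes f g :: "'a \<Rightarrow> real"
  assumes [measurable]: "f \<in> borel_measurable M" "g \<in> borel_measurable M"
   and fi: "integrable M (\<lambda>x. (f x)\<^sup>2)" and gi: "integrable M (\<lambda>x. (g x)\<^sup>2)"
  shows "integrable M (\<lambda>x. f x * g x)"
    "\<bar>\<integral>x. f x * g x \<partial>M\<bar> \<le> sqrt (\<integral>x. (f x)\<^sup>2 \<partial>M) * sqrt (\<integral>x. (g x)\<^sup>2 \<partial>M)"
proof -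
  have pw: "2 * \<bar>a * b\<bar> \<le> s * a\<^sup>2 + b\<^sup>2 / s" if "s > 0" for a b s :: real
  proof -
    have "0 \<le> (s * \<bar>a\<bar> - \<bar>b\<bar>)\<^sup>2" by simp
    then have "2 * s * \<bar>a * b\<bar> \<le> s * s * a\<^sup>2 + b\<^sup>2"
      by (simp add: power2_eq_square algebra_simps abs_mult)
    moreover have "(s * a\<^sup>2 + b\<^sup>2 / s) * s = s * s * a\<^sup>2 + b\<^sup>2" using that
      by (simp add: field_simps power2_eq_square)
    ultimately have "2 * \<bar>a * b\<bar> * s \<le> (s * a\<^sup>2 + b\<^sup>2 / s) * s"
      by (simp add: mult_ac)
    then show ?thesis using that by (meson mult_le_cancel_right_pos)
  qed
  show I: "integrable M (\<lambda>x. f x * g x)"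
  proof (rule Bochner_Integration.integrable_bound[of _ "\<lambda>x. (f x)\<^sup>2 + (g x)\<^sup>2"])
    show "integrable M (\<lambda>x. (f x)\<^sup>2 + (g x)\<^sup>2)" using fi gi by auto
    show "(\<lambda>x. f x * g x) \<in> borel_measurable M" by measurable
    show "AE x in M. norm (f x * g x) \<le> norm ((f x)\<^sup>2 + (g x)\<^sup>2)"
      using pw[of 1] by (auto intro!: AE_I2) (smt (verit) zero_le_power2)
  qed
  have "\<bar>\<integral>x. f x * g x \<partial>M\<bar> \<le> (\<integral>x. \<bar>f x * g x\<bar> \<partial>M)"
    using integral_abs_bound by blast
  also have "\<dots> \<le> sqrt (\<integral>x. (f x)\<^sup>2 \<partial>M) * sqrt (\<integral>x. (g x)\<^sup>2 \<partial>M)"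
  proof (rule real_cs_aux)
    show "0 \<le> (\<integral>x. (f x)\<^sup>2 \<partial>M)" "0 \<le> (\<integral>x. (g x)\<^sup>2 \<partial>M)" by auto
    fix s :: real assume s: "s > 0"
    have "(\<integral>x. \<bar>f x * g x\<bar> \<partial>M) \<le> (\<integral>x. (s * (f x)\<^sup>2 + (g x)\<^sup>2 / s) / 2 \<partial>M)"
      using I fi gi pw[OF s] by (intro integral_mono) (auto simp: field_simps)
    also have "\<dots> = (s * (\<integral>x. (f x)\<^sup>2 \<partial>M) + (\<integral>x. (g x)\<^sup>2 \<partial>M) / s) / 2"
      using fi gi by simp
    finally show "(\<integral>x. \<bar>f x * g x\<bar> \<partial>M) \<le> (s * (\<integral>x. (f x)\<^sup>2 \<partial>M) + (\<integral>x. (g x)\<^sup>2 \<partial>M) / s) / 2" .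
  qed
  finally show "\<bar>\<integral>x. f x * g x \<partial>M\<bar> \<le> sqrt (\<integral>x. (f x)\<^sup>2 \<partial>M) * sqrt (\<integral>x. (g x)\<^sup>2 \<partial>M)" .
qed

lemma l2_csv:
  fixes F G :: "'a \<Rightarrow> 'b::{euclidean_space}"
  assumes [measurable]: "F \<in> borel_measurable M" "G \<in> borel_measurable M"
   and fi: "integrable M (\<lambda>x. (norm (F x))\<^sup>2)" and gi: "integrable M (\<lambda>x. (norm (G x))\<^sup>2)"
  shows "integrable M (\<lambda>x. F x \<bullet> G x)"
    "\<bar>\<integral>x. F x \<bullet> G x \<partial>M\<bar> \<le> sqrt (\<integral>x. (norm (F x))\<^sup>2 \<partial>M) * sqrt (\<integral>x. (norm (G x))\<^sup>2 \<partial>M)"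
proof -
  note c = l2_cs[of "\<lambda>x. norm (F x)" M "\<lambda>x. norm (G x)", OF _ _ fi gi]
  have ni: "integrable M (\<lambda>x. norm (F x) * norm (G x))" using c by auto
  show I: "integrable M (\<lambda>x. F x \<bullet> G x)"
    by (rule Bochner_Integration.integrable_bound[OF ni]) (auto intro!: AE_I2 Cauchy_Schwarz_ineq2)
  have "\<bar>\<integral>x. F x \<bullet> G x \<partial>M\<bar> \<le> (\<integral>x. \<bar>F x \<bullet> G x\<bar> \<partial>M)"
    using integral_abs_bound by blast
  also have "\<dots> \<le> (\<integral>x. norm (F x) * norm (G x) \<partial>M)"
    using I ni by (intro integral_mono) (auto intro: Cauchy_Schwarz_ineq2)
  also have "\<dots> \<le> sqrt (\<integral>x. (norm (F x))\<^sup>2 \<partial>M) * sqrt (\<integral>x. (norm (G x))\<^sup>2 \<partial>M)"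
    using c by auto
  finally show "\<bar>\<integral>x. F x \<bullet> G x \<partial>M\<bar> \<le> sqrt (\<integral>x. (norm (F x))\<^sup>2 \<partial>M) * sqrt (\<integral>x. (norm (G x))\<^sup>2 \<partial>M)" .
qed

lemma l2_mink:
  fixes f g :: "'a \<Rightarrow> real"
  assumes [measurable]: "f \<in> borel_measurable M" "g \<in> borel_measurable M"
   and fi: "integrable M (\<lambda>x. (f x)\<^sup>2)" and gi: "integrable M (\<lambda>x. (g x)\<^sup>2)"
  shows "sqrt (\<integral>x. (f x + g x)\<^sup>2 \<partial>M) \<le> sqrt (\<integral>x. (f x)\<^sup>2 \<partial>M) + sqrt (\<integral>x. (g x)\<^sup>2 \<partial>M)"
proof -
  note c = l2_cs[OF assms]
  let ?A = "\<integral>x. (f x)\<^sup>2 \<partial>M" and ?B = "\<integral>x. (g x)\<^sup>2 \<partial>M"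
  have A: "?A \<ge> 0" and B: "?B \<ge> 0" by auto
  have "(\<integral>x. (f x + g x)\<^sup>2 \<partial>M) = (\<integral>x. (f x)\<^sup>2 + 2 * (f x * g x) + (g x)\<^sup>2 \<partial>M)"
    by (simp add: power2_eq_square algebra_simps)
  also have "\<dots> = ?A + 2 * (\<integral>x. f x * g x \<partial>M) + ?B"
    using c fi gi by simp
  also have "\<dots> \<le> ?A + 2 * (sqrt ?A * sqrt ?B) + ?B" using c by simp
  also have "\<dots> = (sqrt ?A + sqrt ?B)\<^sup>2" using A B by (simp add: power2_eq_square algebra_simps)
  finally show ?thesis
    by (metis add_nonneg_nonneg real_le_lsqrt real_sqrt_ge_zero A B)
qed

lemma l2_conv:
  fixes a :: "nat \<Rightarrow> 'a \<Rightarrow> real" and b :: "'a \<Rightarrow> real"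
  assumes [measurable]: "\<And>n. a n \<in> borel_measurable M" "b \<in> borel_measurable M"
   and ai: "\<And>n. integrable M (\<lambda>x. (a n x)\<^sup>2)" and bi: "integrable M (\<lambda>x. (b x)\<^sup>2)"
   and lim: "(\<lambda>n. \<integral>x. (a n x - b x)\<^sup>2 \<partial>M) \<longlonglongrightarrow> 0"
  shows "(\<lambda>n. \<integral>x. (a n x)\<^sup>2 \<partial>M) \<longlonglongrightarrow> (\<integral>x. (b x)\<^sup>2 \<partial>M)"
proof -
  let ?N = "\<lambda>f. sqrt (\<integral>x. (f x)\<^sup>2 \<partial>M)"
  have di: "integrable M (\<lambda>x. (a n x - b x)\<^sup>2)" for n using sq_int_diff[OF assms(1,2) ai bi] .
  have di2: "integrable M (\<lambda>x. (b x - a n x)\<^sup>2)" for n using sq_int_diff[OF assms(2,1) bi ai] .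
  have e: "?N (\<lambda>x. b x - a n x) = ?N (\<lambda>x. a n x - b x)" for n
    by (simp add: power2_commute)
  have le: "\<bar>?N (a n) - ?N b\<bar> \<le> ?N (\<lambda>x. a n x - b x)" for n
  proof -
    have "?N (a n) = ?N (\<lambda>x. b x + (a n x - b x))" by simp
    also have "\<dots> \<le> ?N b + ?N (\<lambda>x. a n x - b x)"
      by (rule l2_mink) (use bi di in auto)
    finally have 1: "?N (a n) \<le> ?N b + ?N (\<lambda>x. a n x - b x)" .
    have "?N b = ?N (\<lambda>x. a n x + (b x - a n x))" by simp
    also have "\<dots> \<le> ?N (a n) + ?N (\<lambda>x. b x - a n x)"
      by (rule l2_mink) (use ai di2 in auto)
    finally have 2: "?N b \<le> ?N (a n) + ?N (\<lambda>x. a n x - b x)" using e by simp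
    from 1 2 show ?thesis by linarith
  qed
  have "(\<lambda>n. ?N (\<lambda>x. a n x - b x)) \<longlonglongrightarrow> sqrt 0"
    by (intro tendsto_intros lim)
  then have t1: "(\<lambda>n. ?N (\<lambda>x. a n x - b x)) \<longlonglongrightarrow> 0" by simp
  then have t2: "(\<lambda>n. - ?N (\<lambda>x. a n x - b x)) \<longlonglongrightarrow> 0" using tendsto_minus by fastforce
  have "(\<lambda>n. ?N (a n) - ?N b) \<longlonglongrightarrow> 0"
  proof (rule tendsto_sandwich[OF _ _ t2 t1])
    show "\<forall>\<^sub>F n in sequentially. - ?N (\<lambda>x. a n x - b x) \<le> ?N (a n) - ?N b"
    proof (intro always_eventually allI)
      fix n show "- ?N (\<lambda>x. a n x - b x) \<le> ?N (a n) - ?N b" using le[of n] unfolding abs_le_iff by linarith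
    qed
    show "\<forall>\<^sub>F n in sequentially. ?N (a n) - ?N b \<le> ?N (\<lambda>x. a n x - b x)"
    proof (intro always_eventually allI)
      fix n show "?N (a n) - ?N b \<le> ?N (\<lambda>x. a n x - b x)" using le[of n] unfolding abs_le_iff by linarith
    qed
  qed
  then have "(\<lambda>n. ?N (a n)) \<longlonglongrightarrow> ?N b"
    using Lim_null by blast
  from tendsto_power[OF this, of 2] have "(\<lambda>n. (?N (a n))\<^sup>2) \<longlonglongrightarrow> (?N b)\<^sup>2" .
  moreover have "(?N (a n))\<^sup>2 = (\<integral>x. (a n x)\<^sup>2 \<partial>M)" for n by simp
  moreover have "(?N b)\<^sup>2 = (\<integral>x. (b x)\<^sup>2 \<partial>M)" by simp
  ultimately show ?thesis by simp
qed

lemma nsq: "(norm a - norm b)\<^sup>2 \<le> (norm (a - b))\<^sup>2"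
proof -
  have "\<bar>norm a - norm b\<bar> \<le> norm (a - b)" by (rule norm_triangle_ineq3)
  then have "\<bar>norm a - norm b\<bar>\<^sup>2 \<le> (norm (a - b))\<^sup>2" by (rule power_mono) simp
  then show ?thesis by simp
qed

lemma l2_convv:
  fixes a :: "nat \<Rightarrow> 'a \<Rightarrow> 'b::euclidean_space" and b :: "'a \<Rightarrow> 'b"
  assumes [measurable]: "\<And>n. a n \<in> borel_measurable M" "b \<in> borel_measurable M"
   and ai: "\<And>n. integrable M (\<lambda>x. (norm (a n x))\<^sup>2)" and bi: "integrable M (\<lambda>x. (norm (b x))\<^sup>2)"
   and lim: "(\<lambda>n. \<integral>x. (norm (a n x - b x))\<^sup>2 \<partial>M) \<longlonglongrightarrow> 0"
  shows "(\<lambda>n. \<integral>x. (norm (a n x))\<^sup>2 \<partial>M) \<longlonglongrightarrow> (\<integral>x. (norm (b x))\<^sup>2 \<partial>M)"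
proof (rule l2_conv[of "\<lambda>n x. norm (a n x)" M "\<lambda>x. norm (b x)"])
  show "(\<lambda>n. \<integral>x. (norm (a n x) - norm (b x))\<^sup>2 \<partial>M) \<longlonglongrightarrow> 0"
  proof (rule tendsto_sandwich[OF _ _ tendsto_const lim])
    show "\<forall>\<^sub>F n in sequentially. 0 \<le> (\<integral>x. (norm (a n x) - norm (b x))\<^sup>2 \<partial>M)" by auto
    have "(\<integral>x. (norm (a n x) - norm (b x))\<^sup>2 \<partial>M) \<le> (\<integral>x. (norm (a n x - b x))\<^sup>2 \<partial>M)" for n
    proof (rule int_mono_nn)
      show "integrable M (\<lambda>x. (norm (a n x - b x))\<^sup>2)"
        using sq_int_diffv[OF assms(1,2) ai bi] .
    qed (auto intro!: nsq)
    then show "\<forall>\<^sub>F n in sequentially. (\<integral>x. (norm (a n x) - norm (b x))\<^sup>2 \<partial>M) \<le> (\<integral>x. (norm (a n x - b x))\<^sup>2 \<partial>M)"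
      by auto
  qed
qed (use ai bi in auto)

lemma partial_zero_open:
  fixes f :: "real^'n::finite \<Rightarrow> real"
  assumes "open U" "\<And>y. y \<in> U \<Longrightarrow> f y = 0" "x \<in> U"
  shows "partial i f x = 0"
proof -
  have "((\<lambda>_. 0::real) has_derivative (\<lambda>_. 0)) (at x)" by simp
  then have "(f has_derivative (\<lambda>_. 0)) (at x)"
    by (rule has_derivative_transform_within_open[OF _ assms(1,3)]) (use assms(2) in auto)
  then have "frechet_derivative f (at x) = (\<lambda>_. 0)" by (metis frechet_derivative_at)
  then show ?thesis by (simp add: partial_def)
qed

lemma partial_zero_outside:
  fixes f :: "real^'n::finite \<Rightarrow> real"
  assumes "compact K" "\<And>y. y \<notin> K \<Longrightarrow> f y = 0" "x \<notin> K"
  shows "partial i f x = 0"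
  using partial_zero_open[of "- K" f x i] assms compact_imp_closed by blast

lemma diff_cont:
  fixes f :: "'a::real_normed_vector \<Rightarrow> 'b::real_normed_vector"
  assumes "\<And>x. f differentiable (at x)"
  shows "continuous_on UNIV f"
  using assms by (intro differentiable_imp_continuous_on differentiable_at_imp_differentiable_on) auto

lemma cs_integrable:
  fixes f :: "real^'n::finite \<Rightarrow> real"
  assumes "continuous_on UNIV f" "compact K" "\<And>x. x \<notin> K \<Longrightarrow> f x = 0"
  shows "integrable lborel f"
proof -
  have "integrable lborel (\<lambda>x. indicator K x *\<^sub>R f x)"
    by (rule borel_integrable_compact[OF assms(2)]) (use assms(1) continuous_on_subset in blast)
  moreover have "(\<lambda>x. indicator K x *\<^sub>R f x) = f" using assms(3) by (auto simp: fun_eq_iff indicator_def)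
  ultimately show ?thesis by simp
qed

lemma partial_diff:
  fixes f g :: "real^'n::finite \<Rightarrow> real"
  assumes "f differentiable (at x)" "g differentiable (at x)"
  shows "partial i (\<lambda>y. f y - g y) x = partial i f x - partial i g x"
proof -
  have "((\<lambda>y. f y - g y) has_derivative (\<lambda>w. vgrad f x \<bullet> w - vgrad g x \<bullet> w)) (at x)"
    using frechet_vgrad[OF assms(1)] frechet_vgrad[OF assms(2)] by (rule has_derivative_diff)
  then have "frechet_derivative (\<lambda>y. f y - g y) (at x) = (\<lambda>w. vgrad f x \<bullet> w - vgrad g x \<bullet> w)"
    by (metis frechet_derivative_at)
  then show ?thesis unfolding partial_def[of i "\<lambda>y. f y - g y"] by (simp add: vgrad_axis)
qed

lemma partial_mult:
  fixes f g :: "real^'n::finite \<Rightarrow> real"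
  assumes "f differentiable (at x)" "g differentiable (at x)"
  shows "partial i (\<lambda>y. f y * g y) x = partial i f x * g x + f x * partial i g x"
    "(\<lambda>y. f y * g y) differentiable (at x)"
proof -
  have d: "((\<lambda>y. f y * g y) has_derivative (\<lambda>w. f x * (vgrad g x \<bullet> w) + (vgrad f x \<bullet> w) * g x)) (at x)"
    using frechet_vgrad[OF assms(1)] frechet_vgrad[OF assms(2)] by (rule has_derivative_mult)
  then have "frechet_derivative (\<lambda>y. f y * g y) (at x) = (\<lambda>w. f x * (vgrad g x \<bullet> w) + (vgrad f x \<bullet> w) * g x)"
    by (metis frechet_derivative_at)
  then show "partial i (\<lambda>y. f y * g y) x = partial i f x * g x + f x * partial i g x"
    unfolding partial_def[of i "\<lambda>y. f y * g y"] by (simp add: vgrad_axis)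
  show "(\<lambda>y. f y * g y) differentiable (at x)" using d by (auto simp: differentiable_def)
qed

lemma iter_partial_snoc: "iter_partial is (partial i f) = iter_partial (is @ [i]) f"
  by (induction "is") auto

lemma smooth_partial: "smooth f \<Longrightarrow> smooth (partial i f)"
  unfolding smooth_def by (simp add: iter_partial_snoc)

lemma smooth_diff_at: "smooth f \<Longrightarrow> f differentiable (at x)"
  unfolding smooth_def by (metis iter_partial.simps(1))

lemma iter_partial_diff:
  assumes "smooth f" "smooth g"
  shows "iter_partial is (\<lambda>y. f y - g y) = (\<lambda>y. iter_partial is f y - iter_partial is g y)"
proof (induction "is")
  case Nil then show ?case by simp
next
  case (Cons i "is")
  have "iter_partial (i # is) (\<lambda>y. f y - g y) = partial i (\<lambda>y. iter_partial is f y - iter_partial is g y)"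
    using Cons by simp
  also have "\<dots> = (\<lambda>y. partial i (iter_partial is f) y - partial i (iter_partial is g) y)"
    using assms unfolding smooth_def by (intro ext partial_diff) auto
  finally show ?case by simp
qed

lemma smooth_diff: "smooth f \<Longrightarrow> smooth g \<Longrightarrow> smooth (\<lambda>y. f y - g y)"
  unfolding smooth_def[of "\<lambda>y. f y - g y"] iter_partial_diff
  by (auto simp: smooth_def intro!: differentiable_diff)

lemma vgrad_diff:
  assumes "f differentiable (at x)" "g differentiable (at x)"
  shows "vgrad (\<lambda>y. f y - g y) x = vgrad f x - vgrad g x"
  using partial_diff[OF assms] by (simp add: vgrad_def vec_eq_iff)

lemma test_fun_diff:
  assumes "test_fun D f" "test_fun D g"
  shows "test_fun D (\<lambda>y. f y - g y)"
proof -
  let ?A = "closure {x. f x \<noteq> 0}" and ?B = "closure {x. g x \<noteq> 0}" and ?C = "closure {x. f x - g x \<noteq> 0}"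
  have "{x. f x - g x \<noteq> 0} \<subseteq> {x. f x \<noteq> 0} \<union> {x. g x \<noteq> 0}" by auto
  then have "?C \<subseteq> closure ({x. f x \<noteq> 0} \<union> {x. g x \<noteq> 0})" by (rule closure_mono)
  then have sub: "?C \<subseteq> ?A \<union> ?B" by (simp add: closure_Un)
  have "compact (?A \<union> ?B)" using assms by (auto simp: test_fun_def)
  then have "compact ((?A \<union> ?B) \<inter> ?C)" by (rule compact_Int_closed) simp
  moreover have "(?A \<union> ?B) \<inter> ?C = ?C" using sub by blast
  ultimately have "compact ?C" by simp
  moreover have "?A \<subseteq> D" "?B \<subseteq> D" "smooth f" "smooth g" using assms by (auto simp: test_fun_def)
  moreover then have "smooth (\<lambda>y. f y - g y)" by (simp add: smooth_diff)
  ultimately show ?thesis using sub unfolding test_fun_def by blast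
qed

lemma test_props:
  fixes \<phi> :: "real^'n::finite \<Rightarrow> real"
  assumes "test_fun D \<phi>"
  defines "K \<equiv> closure {x. \<phi> x \<noteq> 0}"
  shows "compact K" "K \<subseteq> D" "\<And>x. x \<notin> K \<Longrightarrow> \<phi> x = 0"
    "\<And>x. \<phi> differentiable (at x)" "\<And>x. partial i \<phi> differentiable (at x)"
    "continuous_on UNIV \<phi>" "continuous_on UNIV (partial i \<phi>)"
    "continuous_on UNIV (partial j (partial i \<phi>))"
    "\<And>x. x \<notin> K \<Longrightarrow> partial i \<phi> x = 0"
    "\<And>x. x \<notin> K \<Longrightarrow> partial j (partial i \<phi>) x = 0"
    "smooth (partial i \<phi>)"
proof -
  have s: "smooth \<phi>" using assms by (simp add: test_fun_def)
  show K: "compact K" "K \<subseteq> D" using assms by (auto simp: test_fun_def K_def)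
  show z: "\<And>x. x \<notin> K \<Longrightarrow> \<phi> x = 0" using closure_subset[of "{x. \<phi> x \<noteq> 0}"] unfolding K_def by blast
  show d: "\<And>x. \<phi> differentiable (at x)" using s smooth_diff_at by blast
  show sp: "smooth (partial i \<phi>)" using s smooth_partial by blast
  show d1: "\<And>x. partial i \<phi> differentiable (at x)" using sp smooth_diff_at by blast
  have d2: "\<And>x. partial j (partial i \<phi>) differentiable (at x)"
    using sp smooth_partial smooth_diff_at by blast
  show "continuous_on UNIV \<phi>" "continuous_on UNIV (partial i \<phi>)"
    "continuous_on UNIV (partial j (partial i \<phi>))" using d d1 d2 diff_cont by blast+
  show z1: "\<And>x. x \<notin> K \<Longrightarrow> partial i \<phi> x = 0"
    using partial_zero_outside[of K \<phi>] K(1) z by blast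
  show "\<And>x. x \<notin> K \<Longrightarrow> partial j (partial i \<phi>) x = 0"
    using partial_zero_outside[of K "partial i \<phi>"] K(1) z1 by blast
qed

lemma transl_integral:
  fixes w :: "'a::euclidean_space \<Rightarrow> real"
  assumes "w \<in> borel_measurable borel"
  shows "(\<integral>x. w (x + c) \<partial>lborel) = integral\<^sup>L lborel w"
proof -
  have "integral\<^sup>L lborel w = integral\<^sup>L (distr lborel borel ((+) c)) w"
    by (simp add: lborel_distr_plus)
  also have "\<dots> = (\<integral>x. w (c + x) \<partial>lborel)"
    by (rule integral_distr) (use assms in auto)
  finally show ?thesis by (simp add: add.commute)
qed

lemma line_fubini:
  fixes w :: "real^'n::finite \<Rightarrow> real" and e :: "real^'n"
  assumes cw: "continuous_on UNIV w" and K: "compact K" and z: "\<And>x. x \<notin> K \<Longrightarrow> w x = 0"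
    and ab: "a \<le> b"
  shows "integrable lborel (\<lambda>x. \<integral>t. indicator {a..b} t * w (x + t *\<^sub>R e) \<partial>lborel)"
    "(\<integral>x. (\<integral>t. indicator {a..b} t * w (x + t *\<^sub>R e) \<partial>lborel) \<partial>lborel) = (b - a) * integral\<^sup>L lborel w"
proof -
  define g where "g = (\<lambda>p::(real^'n) \<times> real. indicator {a..b} (snd p) * w (fst p + snd p *\<^sub>R e))"
  define S where "S = (\<lambda>p::(real^'n) \<times> real. (fst p - snd p *\<^sub>R e, snd p)) ` (K \<times> {a..b})"
  have cS: "compact S" unfolding S_def
    by (intro compact_continuous_image compact_Times K compact_Icc continuous_intros)
  have "bounded (w ` K)"
    by (intro compact_imp_bounded compact_continuous_image continuous_on_subset[OF cw] K) auto
  then obtain B where B0: "B > 0" and BK: "\<forall>y\<in>w ` K. norm y \<le> B" using bounded_pos by blast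
  have B: "\<bar>w x\<bar> \<le> B" for x
    using BK B0 z[of x] by (cases "x \<in> K") auto
  have wm: "w \<in> borel_measurable borel" using cw by (rule borel_measurable_continuous_onI)
  have m1: "(\<lambda>p::(real^'n) \<times> real. w (fst p + snd p *\<^sub>R e)) \<in> borel_measurable borel"
    by (rule borel_measurable_continuous_onI)
       (intro continuous_on_compose2[OF cw] continuous_intros, auto)
  have m2: "(\<lambda>p::(real^'n) \<times> real. indicator {a..b} (snd p) :: real) \<in> borel_measurable borel"
  proof -
    have "(\<lambda>p::(real^'n) \<times> real. indicator {a..b} (snd p) :: real) = indicator (UNIV \<times> {a..b})"
      by (auto simp: fun_eq_iff indicator_def)
    moreover have "UNIV \<times> {a..b} \<in> sets (borel :: ((real^'n) \<times> real) measure)"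
      by (intro borel_closed closed_Times) auto
    ultimately show ?thesis by (simp add: borel_measurable_indicator)
  qed
  have gm: "g \<in> borel_measurable lborel" unfolding g_def using m1 m2 by simp
  have Si: "integrable lborel (\<lambda>p. B * indicator S p :: real)"
  proof -
    have "S \<in> sets lborel" using cS by (simp add: borel_closed compact_imp_closed)
    moreover have "emeasure lborel S < \<infinity>" using cS by (rule emeasure_compact_finite)
    ultimately show ?thesis by simp
  qed
  have gi: "integrable lborel g"
  proof (rule Bochner_Integration.integrable_bound[OF Si gm])
    show "AE p in lborel. norm (g p) \<le> norm (B * indicator S p)"
    proof (intro AE_I2)
      fix p :: "(real^'n) \<times> real"
      show "norm (g p) \<le> norm (B * indicator S p)"
      proof (cases "g p = 0")
        case True then show ?thesis by simp
      next
        case False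
        then have "snd p \<in> {a..b}" "fst p + snd p *\<^sub>R e \<in> K"
          unfolding g_def using z by (auto simp: indicator_def split: if_splits)
        then have "p \<in> S" unfolding S_def
          by (intro image_eqI[of _ _ "(fst p + snd p *\<^sub>R e, snd p)"]) auto
        then show ?thesis using B B0 unfolding g_def by (auto simp: indicator_def abs_mult)
      qed
    qed
  qed
  then have gi2: "integrable (lborel \<Otimes>\<^sub>M lborel) g" by (simp add: lborel_prod)
  have geq: "g (x, t) = indicator {a..b} t * w (x + t *\<^sub>R e)" for x t by (simp add: g_def)
  show "integrable lborel (\<lambda>x. \<integral>t. indicator {a..b} t * w (x + t *\<^sub>R e) \<partial>lborel)"
    using lborel_pair.integrable_fst'[OF gi2] by (simp add: geq)
  have gi3: "integrable (lborel \<Otimes>\<^sub>M lborel) (\<lambda>(x, t). indicator {a..b} t * w (x + t *\<^sub>R e))"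
    using gi2 by (simp add: g_def case_prod_beta')
  have "(\<integral>x. (\<integral>t. indicator {a..b} t * w (x + t *\<^sub>R e) \<partial>lborel) \<partial>lborel)
      = (\<integral>t. (\<integral>x. indicator {a..b} t * w (x + t *\<^sub>R e) \<partial>lborel) \<partial>lborel)"
    using lborel_pair.Fubini_integral[OF gi3] by simp
  also have "\<dots> = (\<integral>t. indicator {a..b} t * integral\<^sup>L lborel w \<partial>lborel)"
    by (simp add: transl_integral[OF wm])
  also have "\<dots> = (b - a) * integral\<^sup>L lborel w" using ab by simp
  finally show "(\<integral>x. (\<integral>t. indicator {a..b} t * w (x + t *\<^sub>R e) \<partial>lborel) \<partial>lborel) = (b - a) * integral\<^sup>L lborel w" .
qed

lemma ftc_line:
  fixes u :: "real^'n::finite \<Rightarrow> real"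
  assumes d: "\<And>x. u differentiable (at x)" and c: "continuous_on UNIV (partial i u)" and ab: "a \<le> b"
  shows "(\<integral>t. indicator {a..b} t * partial i u (x + t *\<^sub>R axis i 1) \<partial>lborel)
       = u (x + b *\<^sub>R axis i 1) - u (x + a *\<^sub>R axis i 1)"
proof -
  let ?e = "axis i 1 :: real^'n"
  have "(\<integral>t. indicator {a..b} t *\<^sub>R partial i u (x + t *\<^sub>R ?e) \<partial>lborel)
       = u (x + b *\<^sub>R ?e) - u (x + a *\<^sub>R ?e)"
  proof (rule integral_FTC_atLeastAtMost[OF ab])
    fix t assume "a \<le> t" "t \<le> b"
    have "u differentiable at (x + t *\<^sub>R ?e)" by (rule d)
    from line_deriv[OF this]
    have "((\<lambda>s. u (x + s *\<^sub>R ?e)) has_real_derivative partial i u (x + t *\<^sub>R ?e)) (at t)"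
      by (simp add: vgrad_axis)
    then show "((\<lambda>s. u (x + s *\<^sub>R ?e)) has_vector_derivative partial i u (x + t *\<^sub>R ?e)) (at t within {a..b})"
      by (simp add: has_real_derivative_iff_has_vector_derivative has_vector_derivative_at_within)
  next
    show "continuous_on {a..b} (\<lambda>t. partial i u (x + t *\<^sub>R ?e))"
      by (intro continuous_on_compose2[OF c] continuous_intros) auto
  qed
  then show ?thesis by simp
qed

lemma ibp0:
  fixes u :: "real^'n::finite \<Rightarrow> real"
  assumes d: "\<And>x. u differentiable (at x)" and c: "continuous_on UNIV (partial i u)"
    and K: "compact K" and z: "\<And>x. x \<notin> K \<Longrightarrow> u x = 0"
  shows "integral\<^sup>L lborel (partial i u) = 0"
proof -
  let ?e = "axis i 1 :: real^'n"
  have zp: "\<And>x. x \<notin> K \<Longrightarrow> partial i u x = 0" using partial_zero_outside[of K u] K z by blast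
  have cu: "continuous_on UNIV u" using d diff_cont by blast
  note lf = line_fubini[OF c K zp, of 0 1 ?e]
  have "(\<integral>x. (\<integral>t. indicator {0..1} t * partial i u (x + t *\<^sub>R ?e) \<partial>lborel) \<partial>lborel)
      = (\<integral>x. u (x + ?e) - u x \<partial>lborel)"
    using ftc_line[OF d c, of 0 1] by simp
  also have "\<dots> = (\<integral>x. u (x + ?e) \<partial>lborel) - integral\<^sup>L lborel u"
  proof (rule Bochner_Integration.integral_diff)
    show "integrable lborel u" using cs_integrable[OF cu K z] .
    show "integrable lborel (\<lambda>x. u (x + ?e))"
    proof (rule cs_integrable[of _ "(+) (- ?e) ` K"])
      show "continuous_on UNIV (\<lambda>x. u (x + ?e))"
        by (intro continuous_on_compose2[OF cu] continuous_intros) auto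
      show "compact ((+) (- ?e) ` K)" using K by (rule compact_translation)
      fix x assume "x \<notin> (+) (- ?e) ` K"
      then have "x + ?e \<notin> K" by (metis add_minus_cancel image_eqI add.commute)
      then show "u (x + ?e) = 0" by (rule z)
    qed
  qed
  also have "\<dots> = 0"
    using transl_integral[OF borel_measurable_continuous_onI[OF cu]] by simp
  finally show ?thesis using lf(2) by simp
qed

lemma ibp:
  fixes f g :: "real^'n::finite \<Rightarrow> real"
  assumes df: "\<And>x. f differentiable (at x)" and dg: "\<And>x. g differentiable (at x)"
    and cf: "continuous_on UNIV (partial i f)" and cg: "continuous_on UNIV (partial i g)"
    and K: "compact K" and z: "\<And>x. x \<notin> K \<Longrightarrow> f x = 0"
  shows "(\<integral>x. partial i f x * g x \<partial>lborel) = - (\<integral>x. f x * partial i g x \<partial>lborel)"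
proof -
  let ?u = "\<lambda>y. f y * g y"
  have du: "\<And>x. ?u differentiable (at x)" using partial_mult(2)[OF df dg] .
  have pu: "partial i ?u = (\<lambda>x. partial i f x * g x + f x * partial i g x)"
    using partial_mult(1)[OF df dg] by (intro ext) auto
  have cf0: "continuous_on UNIV f" and cg0: "continuous_on UNIV g" using df dg diff_cont by blast+
  have cu: "continuous_on UNIV (partial i ?u)" unfolding pu
    using cf cg cf0 cg0 by (intro continuous_intros)
  have zf: "\<And>x. x \<notin> K \<Longrightarrow> partial i f x = 0" using partial_zero_outside[of K f] K z by blast
  have i1: "integrable lborel (\<lambda>x. partial i f x * g x)"
    by (rule cs_integrable[OF _ K]) (use cf cg0 zf in \<open>auto intro!: continuous_intros\<close>)
  have i2: "integrable lborel (\<lambda>x. f x * partial i g x)"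
    by (rule cs_integrable[OF _ K]) (use cf0 cg z in \<open>auto intro!: continuous_intros\<close>)
  have "integral\<^sup>L lborel (partial i ?u) = 0"
    by (rule ibp0[OF du cu K]) (use z in auto)
  then have "(\<integral>x. partial i f x * g x \<partial>lborel) + (\<integral>x. f x * partial i g x \<partial>lborel) = 0"
    unfolding pu using i1 i2 by simp
  then show ?thesis by linarith
qed

lemma poinc_test:
  fixes f :: "real^'n::finite \<Rightarrow> real"
  assumes d: "\<And>x. f differentiable (at x)" and c: "continuous_on UNIV (partial i f)"
    and K: "compact K" and z: "\<And>x. x \<notin> K \<Longrightarrow> f x = 0" and R: "R > 0" and KR: "K \<subseteq> ball 0 R"
  shows "(\<integral>x. (f x)\<^sup>2 \<partial>lborel) \<le> (2 * R)\<^sup>2 * (\<integral>x. (partial i f x)\<^sup>2 \<partial>lborel)"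
proof -
  let ?e = "axis i 1 :: real^'n"
  let ?J = "\<lambda>x. \<integral>t. indicator {0..2*R} t * (partial i f (x + t *\<^sub>R ?e))\<^sup>2 \<partial>lborel"
  have zp: "\<And>x. x \<notin> K \<Longrightarrow> partial i f x = 0" using partial_zero_outside[of K f] K z by blast
  have c2: "continuous_on UNIV (\<lambda>x. (partial i f x)\<^sup>2)" using c by (intro continuous_intros)
  have z2: "\<And>x. x \<notin> K \<Longrightarrow> (partial i f x)\<^sup>2 = 0" using zp by simp
  have ab: "0 \<le> 2 * R" using R by simp
  note lf = line_fubini[OF c2 K z2 ab, of ?e]
  have pw: "(f x)\<^sup>2 \<le> 2 * R * ?J x" for x
  proof (cases "f x = 0")
    case True
    have "0 \<le> ?J x" by (intro integral_nonneg_AE AE_I2) auto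
    then show ?thesis using True R by simp
  next
    case False
    then have "x \<in> K" using z by blast
    then have nx: "norm x < R" using KR by auto
    have "norm ((2 * R) *\<^sub>R ?e) \<le> norm (x + (2 * R) *\<^sub>R ?e) + norm x"
      by (metis add_diff_cancel_left' norm_triangle_ineq4)
    moreover have "norm ((2 * R) *\<^sub>R ?e) = 2 * R" using R by simp
    ultimately have "norm (x + (2 * R) *\<^sub>R ?e) > R" using nx R by linarith
    then have "x + (2 * R) *\<^sub>R ?e \<notin> K" using KR by auto
    then have fz: "f (x + (2 * R) *\<^sub>R ?e) = 0" by (rule z)
    let ?I = "\<integral>t. indicator {0..2*R} t * partial i f (x + t *\<^sub>R ?e) \<partial>lborel"
    have I: "?I = - f x" using ftc_line[OF d c, of 0 "2*R" x] R fz by simp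
    let ?f1 = "\<lambda>t. indicator {0..2*R} t :: real"
    let ?g1 = "\<lambda>t. indicator {0..2*R} t * partial i f (x + t *\<^sub>R ?e)"
    have cl: "continuous_on UNIV (\<lambda>t. partial i f (x + t *\<^sub>R ?e))"
      by (intro continuous_on_compose2[OF c] continuous_intros) auto
    have m1: "?f1 \<in> borel_measurable lborel" by simp
    have m2: "?g1 \<in> borel_measurable lborel"
      using borel_measurable_continuous_onI[OF cl] by simp
    have sqf: "(\<lambda>t. (?f1 t)\<^sup>2) = ?f1" by (auto simp: fun_eq_iff indicator_def)
    have i1: "integrable lborel (\<lambda>t. (?f1 t)\<^sup>2)" unfolding sqf by (rule integrable_real_indicator) (auto simp: emeasure_lborel_Icc_eq)
    have sqg: "(\<lambda>t. (?g1 t)\<^sup>2) = (\<lambda>t. indicator {0..2*R} t *\<^sub>R (partial i f (x + t *\<^sub>R ?e))\<^sup>2)"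
      by (auto simp: fun_eq_iff indicator_def)
    have i2: "integrable lborel (\<lambda>t. (?g1 t)\<^sup>2)" unfolding sqg
      by (rule borel_integrable_compact) (auto intro!: continuous_intros continuous_on_subset[OF cl])
    note cs = l2_cs(2)[OF m1 m2 i1 i2]
    have fg: "(\<lambda>t. ?f1 t * ?g1 t) = ?g1" by (auto simp: fun_eq_iff indicator_def)
    have J: "(\<integral>t. (?g1 t)\<^sup>2 \<partial>lborel) = ?J x" unfolding sqg by simp
    have "\<bar>?I\<bar> \<le> sqrt (2 * R) * sqrt (?J x)" using cs R unfolding fg sqf J by simp
    then have "\<bar>?I\<bar>\<^sup>2 \<le> (sqrt (2 * R) * sqrt (?J x))\<^sup>2" by (rule power_mono) simp
    also have "\<dots> = 2 * R * ?J x" using R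
      by (simp add: power_mult_distrib integral_nonneg_AE)
    finally show ?thesis using I by simp
  qed
  have "(\<integral>x. (f x)\<^sup>2 \<partial>lborel) \<le> (\<integral>x. 2 * R * ?J x \<partial>lborel)"
    by (rule int_mono_nn) (use lf(1) pw in auto)
  also have "\<dots> = 2 * R * ((2 * R - 0) * (\<integral>x. (partial i f x)\<^sup>2 \<partial>lborel))"
    using lf(2) by simp
  also have "\<dots> = (2 * R)\<^sup>2 * (\<integral>x. (partial i f x)\<^sup>2 \<partial>lborel)" by (simp add: power2_eq_square)
  finally show ?thesis .
qed

lemma D_sets: "open (D::(real^'n::finite) set) \<Longrightarrow> D \<in> sets lebesgue"
  by (simp add: borel_open sets_completionI_sets)

lemma D_sets': "open (D::(real^'n::finite) set) \<Longrightarrow> D \<inter> space lebesgue \<in> sets lebesgue"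
  by (simp add: D_sets)

lemma setint_MD:
  fixes f :: "real^'n::finite \<Rightarrow> real"
  assumes "open D"
  shows "(LINT x:D|lebesgue. f x) = integral\<^sup>L (lebesgue_on D) f"
  unfolding set_lebesgue_integral_def by (simp add: integral_restrict_space[OF D_sets'[OF assms]])

lemma setintegrable_MD:
  fixes f :: "real^'n::finite \<Rightarrow> real"
  assumes "open D"
  shows "set_integrable lebesgue D f \<longleftrightarrow> integrable (lebesgue_on D) f"
  unfolding set_integrable_def by (simp add: integrable_restrict_space[OF D_sets'[OF assms]])

lemma setmeas_MD:
  fixes f :: "real^'n::finite \<Rightarrow> 'b::real_normed_vector"
  assumes "open D"
  shows "set_borel_measurable lebesgue D f \<longleftrightarrow> f \<in> borel_measurable (lebesgue_on D)"
  unfolding set_borel_measurable_def by (rule borel_measurable_restrict_space_iff[OF D_sets'[OF assms], symmetric])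

lemma h0_grad_MD:
  assumes "open D"
  shows "h0_grad D h G \<longleftrightarrow>
     h \<in> borel_measurable (lebesgue_on D) \<and> integrable (lebesgue_on D) (\<lambda>x. (h x)\<^sup>2)
   \<and> G \<in> borel_measurable (lebesgue_on D) \<and> integrable (lebesgue_on D) (\<lambda>x. (norm (G x))\<^sup>2)
   \<and> (\<exists>\<phi>. (\<forall>n. test_fun D (\<phi> n))
        \<and> (\<lambda>n. \<integral>x. (\<phi> n x - h x)\<^sup>2 \<partial>lebesgue_on D) \<longlonglongrightarrow> 0
        \<and> (\<lambda>n. \<integral>x. (norm (vgrad (\<phi> n) x - G x))\<^sup>2 \<partial>lebesgue_on D) \<longlonglongrightarrow> 0)"
  unfolding h0_grad_def setint_MD[OF assms] setintegrable_MD[OF assms] setmeas_MD[OF assms] by simp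

lemma cont_MD:
  fixes f :: "real^'n::finite \<Rightarrow> 'b::real_normed_vector"
  assumes "open D" "continuous_on UNIV f"
  shows "f \<in> borel_measurable (lebesgue_on D)"
  using continuous_imp_measurable_on_sets_lebesgue[OF continuous_on_subset[OF assms(2)] D_sets[OF assms(1)]]
  by simp

lemma lborel_MD:
  fixes f :: "real^'n::finite \<Rightarrow> real"
  assumes "open D" "f \<in> borel_measurable lborel" "\<And>x. x \<notin> D \<Longrightarrow> f x = 0"
  shows "integral\<^sup>L (lebesgue_on D) f = integral\<^sup>L lborel f"
proof -
  have "integral\<^sup>L (lebesgue_on D) f = integral\<^sup>L lebesgue (\<lambda>x. indicator D x *\<^sub>R f x)"
    by (simp add: integral_restrict_space[OF D_sets'[OF assms(1)]])
  also have "(\<lambda>x. indicator D x *\<^sub>R f x) = f" using assms(3) by (auto simp: fun_eq_iff indicator_def)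
  also have "integral\<^sup>L lebesgue f = integral\<^sup>L lborel f" using assms(2) by (simp add: integral_completion)
  finally show ?thesis .
qed

lemma lborel_MD_integrable:
  fixes f :: "real^'n::finite \<Rightarrow> real"
  assumes "open D" "integrable lborel f"
  shows "integrable (lebesgue_on D) f"
proof -
  have "integrable lebesgue f" using assms(2) by (simp add: integrable_completion)
  then have "integrable lebesgue (\<lambda>x. indicator D x *\<^sub>R f x)"
    by (rule integrable_mult_indicator[OF D_sets[OF assms(1)]])
  then show ?thesis by (simp add: integrable_restrict_space[OF D_sets'[OF assms(1)]])
qed

lemma vgrad_cont:
  assumes "test_fun D \<phi>"
  shows "continuous_on UNIV (vgrad \<phi>)"
  unfolding vgrad_def using test_props(7)[OF assms] by (intro continuous_on_vec_lambda) auto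

lemma vgrad_zero:
  assumes "test_fun D \<phi>" "x \<notin> closure {x. \<phi> x \<noteq> 0}"
  shows "vgrad \<phi> x = 0"
  unfolding vgrad_def using test_props(9)[OF assms(1)] assms(2) by (simp add: vec_eq_iff)

definition lap :: "(real^'n::finite \<Rightarrow> real) \<Rightarrow> real^'n \<Rightarrow> real" where
  "lap \<psi> x = (\<Sum>i\<in>UNIV. partial i (partial i \<psi>) x)"

lemma ibp_vec:
  assumes "test_fun D \<phi>" "test_fun D \<psi>"
  shows "(\<integral>x. vgrad \<phi> x \<bullet> vgrad \<psi> x \<partial>lborel) = - (\<integral>x. \<phi> x * lap \<psi> x \<partial>lborel)"
proof -
  note P = test_props[OF assms(1)] and Q = test_props[OF assms(2)]
  let ?K = "closure {x. \<phi> x \<noteq> 0}"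
  have e1: "vgrad \<phi> x \<bullet> vgrad \<psi> x = (\<Sum>i\<in>UNIV. partial i \<phi> x * partial i \<psi> x)" for x
    by (simp add: inner_vec_def vgrad_def)
  have "(\<integral>x. vgrad \<phi> x \<bullet> vgrad \<psi> x \<partial>lborel) = (\<Sum>i\<in>UNIV. \<integral>x. partial i \<phi> x * partial i \<psi> x \<partial>lborel)"
    unfolding e1
  proof (rule Bochner_Integration.integral_sum)
    fix i
    show "integrable lborel (\<lambda>x. partial i \<phi> x * partial i \<psi> x)"
    proof (rule cs_integrable[OF _ P(1)])
      show "continuous_on UNIV (\<lambda>x. partial i \<phi> x * partial i \<psi> x)"
        by (intro continuous_on_mult P(7) Q(7))
      fix x assume "x \<notin> ?K" then show "partial i \<phi> x * partial i \<psi> x = 0" using P(9) by simp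
    qed
  qed
  also have "\<dots> = (\<Sum>i\<in>UNIV. - \<integral>x. \<phi> x * partial i (partial i \<psi>) x \<partial>lborel)"
  proof (rule sum.cong[OF refl])
    fix i
    show "(\<integral>x. partial i \<phi> x * partial i \<psi> x \<partial>lborel) = - (\<integral>x. \<phi> x * partial i (partial i \<psi>) x \<partial>lborel)"
      by (rule ibp[OF P(4) Q(5) P(7) Q(8) P(1) P(3)])
  qed
  also have "\<dots> = - (\<integral>x. \<phi> x * lap \<psi> x \<partial>lborel)"
  proof -
    have "(\<integral>x. \<phi> x * lap \<psi> x \<partial>lborel) = (\<integral>x. (\<Sum>i\<in>UNIV. \<phi> x * partial i (partial i \<psi>) x) \<partial>lborel)"
      by (simp add: lap_def sum_distrib_left)
    also have "\<dots> = (\<Sum>i\<in>UNIV. \<integral>x. \<phi> x * partial i (partial i \<psi>) x \<partial>lborel)"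
    proof (rule Bochner_Integration.integral_sum)
      fix i
      show "integrable lborel (\<lambda>x. \<phi> x * partial i (partial i \<psi>) x)"
      proof (rule cs_integrable[OF _ P(1)])
        show "continuous_on UNIV (\<lambda>x. \<phi> x * partial i (partial i \<psi>) x)"
          by (intro continuous_on_mult P(6) Q(8))
        fix x assume "x \<notin> ?K" then have "\<phi> x = 0" by (rule P(3))
        then show "\<phi> x * partial i (partial i \<psi>) x = 0" by simp
      qed
    qed
    finally show ?thesis by (simp add: sum_negf)
  qed
  finally show ?thesis .
qed

lemma tf_M:
  fixes \<phi> :: "real^'n::finite \<Rightarrow> real"
  assumes D: "open D" and t: "test_fun D \<phi>"
  shows "\<phi> \<in> borel_measurable (lebesgue_on D)" "vgrad \<phi> \<in> borel_measurable (lebesgue_on D)"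
    "lap \<phi> \<in> borel_measurable (lebesgue_on D)"
    "integrable (lebesgue_on D) (\<lambda>x. (\<phi> x)\<^sup>2)"
    "integrable (lebesgue_on D) (\<lambda>x. (norm (vgrad \<phi> x))\<^sup>2)"
    "integrable (lebesgue_on D) (\<lambda>x. (lap \<phi> x)\<^sup>2)"
    "integrable lborel (\<lambda>x. (norm (vgrad \<phi> x))\<^sup>2)"
    "\<And>x. x \<notin> D \<Longrightarrow> \<phi> x = 0" "\<And>x. x \<notin> D \<Longrightarrow> vgrad \<phi> x = 0" "\<And>x. x \<notin> D \<Longrightarrow> lap \<phi> x = 0"
proof -
  note P = test_props[OF t]
  let ?K = "closure {x. \<phi> x \<noteq> 0}"
  have c0: "continuous_on UNIV \<phi>" by (rule P(6))
  have c1: "continuous_on UNIV (vgrad \<phi>)" by (rule vgrad_cont[OF t])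
  have c2: "continuous_on UNIV (lap \<phi>)" unfolding lap_def[abs_def]
    by (intro continuous_on_sum) (use P(8) in auto)
  have z0: "\<And>x. x \<notin> ?K \<Longrightarrow> \<phi> x = 0" by (rule P(3))
  have z1: "\<And>x. x \<notin> ?K \<Longrightarrow> vgrad \<phi> x = 0" by (rule vgrad_zero[OF t])
  have z2: "\<And>x. x \<notin> ?K \<Longrightarrow> lap \<phi> x = 0" unfolding lap_def using P(10) by simp
  show "\<phi> \<in> borel_measurable (lebesgue_on D)" by (rule cont_MD[OF D c0])
  show "vgrad \<phi> \<in> borel_measurable (lebesgue_on D)" by (rule cont_MD[OF D c1])
  show "lap \<phi> \<in> borel_measurable (lebesgue_on D)" by (rule cont_MD[OF D c2])
  have "integrable lborel (\<lambda>x. (\<phi> x)\<^sup>2)"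
  proof (rule cs_integrable[OF _ P(1)])
    show "continuous_on UNIV (\<lambda>x. (\<phi> x)\<^sup>2)" using c0 by (intro continuous_intros)
    fix x assume "x \<notin> ?K" then have "\<phi> x = 0" by (rule z0)
    then show "(\<phi> x)\<^sup>2 = 0" by simp
  qed
  then show "integrable (lebesgue_on D) (\<lambda>x. (\<phi> x)\<^sup>2)" by (rule lborel_MD_integrable[OF D])
  show i1: "integrable lborel (\<lambda>x. (norm (vgrad \<phi> x))\<^sup>2)"
    by (rule cs_integrable[OF _ P(1)]) (use c1 z1 in \<open>auto intro!: continuous_intros\<close>)
  then show "integrable (lebesgue_on D) (\<lambda>x. (norm (vgrad \<phi> x))\<^sup>2)" by (rule lborel_MD_integrable[OF D])
  have "integrable lborel (\<lambda>x. (lap \<phi> x)\<^sup>2)"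
    by (rule cs_integrable[OF _ P(1)]) (use c2 z2 in \<open>auto intro!: continuous_intros\<close>)
  then show "integrable (lebesgue_on D) (\<lambda>x. (lap \<phi> x)\<^sup>2)" by (rule lborel_MD_integrable[OF D])
  show "\<And>x. x \<notin> D \<Longrightarrow> \<phi> x = 0" using z0 P(2) by blast
  show "\<And>x. x \<notin> D \<Longrightarrow> vgrad \<phi> x = 0" using z1 P(2) by blast
  show "\<And>x. x \<notin> D \<Longrightarrow> lap \<phi> x = 0" using z2 P(2) by blast
qed

lemma ibp_M:
  assumes D: "open D" and t: "test_fun D \<phi>" "test_fun D \<psi>"
  shows "(\<integral>x. vgrad \<phi> x \<bullet> vgrad \<psi> x \<partial>(lebesgue_on D)) = - (\<integral>x. \<phi> x * lap \<psi> x \<partial>(lebesgue_on D))"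
proof -
  have "(\<integral>x. vgrad \<phi> x \<bullet> vgrad \<psi> x \<partial>(lebesgue_on D)) = (\<integral>x. vgrad \<phi> x \<bullet> vgrad \<psi> x \<partial>lborel)"
    by (rule lborel_MD[OF D]) (use tf_M(9)[OF D t(1)] borel_measurable_continuous_onI[OF vgrad_cont[OF t(1)]]
        borel_measurable_continuous_onI[OF vgrad_cont[OF t(2)]] in auto)
  moreover have "(\<integral>x. \<phi> x * lap \<psi> x \<partial>(lebesgue_on D)) = (\<integral>x. \<phi> x * lap \<psi> x \<partial>lborel)"
  proof (rule lborel_MD[OF D])
    have "\<phi> \<in> borel_measurable lborel" using borel_measurable_continuous_onI[OF test_props(6)[OF t(1)]] by simp
    moreover have "continuous_on UNIV (lap \<psi>)" unfolding lap_def[abs_def]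
      by (intro continuous_on_sum) (use test_props(8)[OF t(2)] in auto)
    then have "lap \<psi> \<in> borel_measurable lborel" using borel_measurable_continuous_onI by simp
    ultimately show "(\<lambda>x. \<phi> x * lap \<psi> x) \<in> borel_measurable lborel"
      by simp
  qed (use tf_M(8)[OF D t(1)] in auto)
  ultimately show ?thesis using ibp_vec[OF t] by simp
qed

lemma closable:
  fixes ch :: "nat \<Rightarrow> real^'n::finite \<Rightarrow> real" and K :: "real^'n \<Rightarrow> real^'n"
  assumes D: "open D" and t: "\<And>n. test_fun D (ch n)"
   and c0: "(\<lambda>n. \<integral>x. (ch n x)\<^sup>2 \<partial>(lebesgue_on D)) \<longlonglongrightarrow> 0"
   and Km: "K \<in> borel_measurable (lebesgue_on D)" and Ki: "integrable (lebesgue_on D) (\<lambda>x. (norm (K x))\<^sup>2)"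
   and c1: "(\<lambda>n. \<integral>x. (norm (vgrad (ch n) x - K x))\<^sup>2 \<partial>(lebesgue_on D)) \<longlonglongrightarrow> 0"
  shows "AE x in lebesgue_on D. K x = 0"
proof -
  let ?M = "lebesgue_on D"
  note T = tf_M[OF D t]
  have dm: "(\<lambda>x. vgrad (ch n) x - K x) \<in> borel_measurable ?M" for n using T(2) Km by measurable
  have di: "integrable ?M (\<lambda>x. (norm (vgrad (ch n) x - K x))\<^sup>2)" for n
    by (rule sq_int_diffv[OF T(2) Km T(5) Ki])
  have s1: "(\<integral>x. K x \<bullet> vgrad (ch n) x \<partial>?M) = 0" for n
  proof -
    let ?A = "\<lambda>m. \<integral>x. vgrad (ch m) x \<bullet> vgrad (ch n) x \<partial>?M"
    let ?c = "\<integral>x. K x \<bullet> vgrad (ch n) x \<partial>?M"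
    have "?A \<longlonglongrightarrow> 0"
    proof (rule Lim_null_comparison)
      let ?g = "\<lambda>m. sqrt (\<integral>x. (ch m x)\<^sup>2 \<partial>?M) * sqrt (\<integral>x. (lap (ch n) x)\<^sup>2 \<partial>?M)"
      show "\<forall>\<^sub>F m in sequentially. norm (?A m) \<le> ?g m"
      proof (intro always_eventually allI)
        fix m
        have "?A m = - (\<integral>x. ch m x * lap (ch n) x \<partial>?M)" by (rule ibp_M[OF D t t])
        then show "norm (?A m) \<le> ?g m" using l2_cs(2)[OF T(1) T(3) T(4) T(6)] by simp
      qed
      have "?g \<longlonglongrightarrow> sqrt 0 * sqrt (\<integral>x. (lap (ch n) x)\<^sup>2 \<partial>?M)"
        by (intro tendsto_intros c0)
      then show "?g \<longlonglongrightarrow> 0" by simp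
    qed
    moreover have "?A \<longlonglongrightarrow> ?c"
    proof -
      have "(\<lambda>m. ?A m - ?c) \<longlonglongrightarrow> 0"
      proof (rule Lim_null_comparison)
        let ?g = "\<lambda>m. sqrt (\<integral>x. (norm (vgrad (ch m) x - K x))\<^sup>2 \<partial>?M) * sqrt (\<integral>x. (norm (vgrad (ch n) x))\<^sup>2 \<partial>?M)"
        show "\<forall>\<^sub>F m in sequentially. norm (?A m - ?c) \<le> ?g m"
        proof (intro always_eventually allI)
          fix m
          have i1: "integrable ?M (\<lambda>x. vgrad (ch m) x \<bullet> vgrad (ch n) x)"
            by (rule l2_csv(1)[OF T(2) T(2) T(5) T(5)])
          have i2: "integrable ?M (\<lambda>x. K x \<bullet> vgrad (ch n) x)"
            by (rule l2_csv(1)[OF Km T(2) Ki T(5)])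
          have "?A m - ?c = (\<integral>x. vgrad (ch m) x \<bullet> vgrad (ch n) x - K x \<bullet> vgrad (ch n) x \<partial>?M)"
            using i1 i2 by simp
          also have "\<dots> = (\<integral>x. (vgrad (ch m) x - K x) \<bullet> vgrad (ch n) x \<partial>?M)"
            by (simp add: inner_diff_left)
          finally show "norm (?A m - ?c) \<le> ?g m"
            using l2_csv(2)[OF dm T(2) di T(5)] by simp
        qed
        have "?g \<longlonglongrightarrow> sqrt 0 * sqrt (\<integral>x. (norm (vgrad (ch n) x))\<^sup>2 \<partial>?M)"
          by (intro tendsto_intros c1)
        then show "?g \<longlonglongrightarrow> 0" by simp
      qed
      then show ?thesis by (simp add: Lim_null[symmetric])
    qed
    ultimately show ?thesis using LIMSEQ_unique by blast
  qed
  let ?Q = "\<integral>x. (norm (K x))\<^sup>2 \<partial>?M"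
  have le: "?Q \<le> sqrt ?Q * sqrt (\<integral>x. (norm (vgrad (ch n) x - K x))\<^sup>2 \<partial>?M)" for n
  proof -
    have m2: "(\<lambda>x. K x - vgrad (ch n) x) \<in> borel_measurable ?M" using T(2) Km by measurable
    have i2: "integrable ?M (\<lambda>x. (norm (K x - vgrad (ch n) x))\<^sup>2)"
      using di[of n] by (simp add: norm_minus_commute)
    have iK: "integrable ?M (\<lambda>x. K x \<bullet> K x)" by (rule l2_csv(1)[OF Km Km Ki Ki])
    have iKc: "integrable ?M (\<lambda>x. K x \<bullet> vgrad (ch n) x)" by (rule l2_csv(1)[OF Km T(2) Ki T(5)])
    have "?Q = (\<integral>x. K x \<bullet> K x \<partial>?M)" by (simp add: power2_norm_eq_inner)
    also have "\<dots> = (\<integral>x. K x \<bullet> (K x - vgrad (ch n) x) \<partial>?M) + (\<integral>x. K x \<bullet> vgrad (ch n) x \<partial>?M)"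
    proof -
      have "(\<integral>x. K x \<bullet> K x \<partial>?M) = (\<integral>x. K x \<bullet> (K x - vgrad (ch n) x) + K x \<bullet> vgrad (ch n) x \<partial>?M)"
        by (simp add: inner_diff_right)
      also have "\<dots> = (\<integral>x. K x \<bullet> (K x - vgrad (ch n) x) \<partial>?M) + (\<integral>x. K x \<bullet> vgrad (ch n) x \<partial>?M)"
        by (rule Bochner_Integration.integral_add[OF l2_csv(1)[OF Km m2 Ki i2] iKc])
      finally show ?thesis .
    qed
    also have "\<dots> = (\<integral>x. K x \<bullet> (K x - vgrad (ch n) x) \<partial>?M)" using s1 by simp
    also have "\<dots> \<le> sqrt ?Q * sqrt (\<integral>x. (norm (K x - vgrad (ch n) x))\<^sup>2 \<partial>?M)"
      using l2_csv(2)[OF Km m2 Ki i2] by simp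
    finally show ?thesis by (simp add: norm_minus_commute)
  qed
  have "(\<lambda>n. sqrt ?Q * sqrt (\<integral>x. (norm (vgrad (ch n) x - K x))\<^sup>2 \<partial>?M)) \<longlonglongrightarrow> sqrt ?Q * sqrt 0"
    by (intro tendsto_intros c1)
  then have "?Q \<le> sqrt ?Q * sqrt 0"
    using le by (intro LIMSEQ_le_const) auto
  then have Q0: "?Q = 0" by (simp add: antisym integral_nonneg_AE)
  have "AE x in ?M. (norm (K x))\<^sup>2 = 0"
    using integral_nonneg_eq_0_iff_AE[OF Ki] Q0 by simp
  then show ?thesis by simp
qed

lemma sandw:
  fixes a b c :: "nat \<Rightarrow> real"
  assumes "\<And>n. 0 \<le> a n" "\<And>n. a n \<le> 2 * b n + 2 * c n" "b \<longlonglongrightarrow> 0" "c \<longlonglongrightarrow> 0"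
  shows "a \<longlonglongrightarrow> 0"
proof (rule tendsto_sandwich[of "\<lambda>_. 0" _ _ "\<lambda>n. 2 * b n + 2 * c n"])
  show "(\<lambda>n. 2 * b n + 2 * c n) \<longlonglongrightarrow> 0" using tendsto_add[OF tendsto_mult_right_zero[OF assms(3)] tendsto_mult_right_zero[OF assms(4)]]
    by simp
qed (use assms in auto)

lemma h0_diff:
  fixes h1 h2 :: "real^'n::finite \<Rightarrow> real"
  assumes D: "open D" and h1: "h0_grad D h1 G1" and h2: "h0_grad D h2 G2"
  shows "h0_grad D (\<lambda>x. h1 x - h2 x) (\<lambda>x. G1 x - G2 x)"
proof -
  let ?M = "lebesgue_on D"
  from h1[unfolded h0_grad_MD[OF D]] obtain \<phi> where
    hm1: "h1 \<in> borel_measurable ?M" and hi1: "integrable ?M (\<lambda>x. (h1 x)\<^sup>2)"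
    and gm1: "G1 \<in> borel_measurable ?M" and gi1: "integrable ?M (\<lambda>x. (norm (G1 x))\<^sup>2)"
    and t1: "\<And>n. test_fun D (\<phi> n)"
    and a1: "(\<lambda>n. \<integral>x. (\<phi> n x - h1 x)\<^sup>2 \<partial>?M) \<longlonglongrightarrow> 0"
    and b1: "(\<lambda>n. \<integral>x. (norm (vgrad (\<phi> n) x - G1 x))\<^sup>2 \<partial>?M) \<longlonglongrightarrow> 0"
    by blast
  from h2[unfolded h0_grad_MD[OF D]] obtain \<psi> where
    hm2: "h2 \<in> borel_measurable ?M" and hi2: "integrable ?M (\<lambda>x. (h2 x)\<^sup>2)"
    and gm2: "G2 \<in> borel_measurable ?M" and gi2: "integrable ?M (\<lambda>x. (norm (G2 x))\<^sup>2)"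
    and t2: "\<And>n. test_fun D (\<psi> n)"
    and a2: "(\<lambda>n. \<integral>x. (\<psi> n x - h2 x)\<^sup>2 \<partial>?M) \<longlonglongrightarrow> 0"
    and b2: "(\<lambda>n. \<integral>x. (norm (vgrad (\<psi> n) x - G2 x))\<^sup>2 \<partial>?M) \<longlonglongrightarrow> 0"
    by blast
  note T1 = tf_M[OF D t1] and T2 = tf_M[OF D t2]
  have c1: "(\<lambda>n. \<integral>x. ((\<phi> n x - \<psi> n x) - (h1 x - h2 x))\<^sup>2 \<partial>?M) \<longlonglongrightarrow> 0"
  proof (rule sandw[OF _ _ a1 a2])
    fix n
    show "0 \<le> (\<integral>x. ((\<phi> n x - \<psi> n x) - (h1 x - h2 x))\<^sup>2 \<partial>?M)" by simp
    have i1: "integrable ?M (\<lambda>x. (\<phi> n x - h1 x)\<^sup>2)" by (rule sq_int_diff[OF T1(1) hm1 T1(4) hi1])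
    have i2: "integrable ?M (\<lambda>x. (\<psi> n x - h2 x)\<^sup>2)" by (rule sq_int_diff[OF T2(1) hm2 T2(4) hi2])
    have "(\<integral>x. ((\<phi> n x - \<psi> n x) - (h1 x - h2 x))\<^sup>2 \<partial>?M) \<le> (\<integral>x. 2 * (\<phi> n x - h1 x)\<^sup>2 + 2 * (\<psi> n x - h2 x)\<^sup>2 \<partial>?M)"
    proof (rule int_mono_nn)
      show "integrable ?M (\<lambda>x. 2 * (\<phi> n x - h1 x)\<^sup>2 + 2 * (\<psi> n x - h2 x)\<^sup>2)" using i1 i2 by simp
      fix x
      have "((\<phi> n x - \<psi> n x) - (h1 x - h2 x)) = ((\<phi> n x - h1 x) - (\<psi> n x - h2 x))" by simp
      then show "((\<phi> n x - \<psi> n x) - (h1 x - h2 x))\<^sup>2 \<le> 2 * (\<phi> n x - h1 x)\<^sup>2 + 2 * (\<psi> n x - h2 x)\<^sup>2"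
        using sq_le2 by metis
    qed simp
    also have "\<dots> = 2 * (\<integral>x. (\<phi> n x - h1 x)\<^sup>2 \<partial>?M) + 2 * (\<integral>x. (\<psi> n x - h2 x)\<^sup>2 \<partial>?M)"
      using i1 i2 by simp
    finally show "(\<integral>x. ((\<phi> n x - \<psi> n x) - (h1 x - h2 x))\<^sup>2 \<partial>?M) \<le> 2 * (\<integral>x. (\<phi> n x - h1 x)\<^sup>2 \<partial>?M) + 2 * (\<integral>x. (\<psi> n x - h2 x)\<^sup>2 \<partial>?M)" .
  qed
  have vd: "vgrad (\<lambda>x. \<phi> n x - \<psi> n x) y = vgrad (\<phi> n) y - vgrad (\<psi> n) y" for n y
    by (rule vgrad_diff[OF test_props(4)[OF t1] test_props(4)[OF t2]])
  have c2: "(\<lambda>n. \<integral>x. (norm (vgrad (\<lambda>x. \<phi> n x - \<psi> n x) x - (G1 x - G2 x)))\<^sup>2 \<partial>?M) \<longlonglongrightarrow> 0"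
  proof (rule sandw[OF _ _ b1 b2])
    fix n
    show "0 \<le> (\<integral>x. (norm (vgrad (\<lambda>x. \<phi> n x - \<psi> n x) x - (G1 x - G2 x)))\<^sup>2 \<partial>?M)" by simp
    have i1: "integrable ?M (\<lambda>x. (norm (vgrad (\<phi> n) x - G1 x))\<^sup>2)" by (rule sq_int_diffv[OF T1(2) gm1 T1(5) gi1])
    have i2: "integrable ?M (\<lambda>x. (norm (vgrad (\<psi> n) x - G2 x))\<^sup>2)" by (rule sq_int_diffv[OF T2(2) gm2 T2(5) gi2])
    have "(\<integral>x. (norm (vgrad (\<lambda>x. \<phi> n x - \<psi> n x) x - (G1 x - G2 x)))\<^sup>2 \<partial>?M)
        \<le> (\<integral>x. 2 * (norm (vgrad (\<phi> n) x - G1 x))\<^sup>2 + 2 * (norm (vgrad (\<psi> n) x - G2 x))\<^sup>2 \<partial>?M)"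
    proof (rule int_mono_nn)
      show "integrable ?M (\<lambda>x. 2 * (norm (vgrad (\<phi> n) x - G1 x))\<^sup>2 + 2 * (norm (vgrad (\<psi> n) x - G2 x))\<^sup>2)"
        using i1 i2 by simp
      fix x
      have "vgrad (\<lambda>x. \<phi> n x - \<psi> n x) x - (G1 x - G2 x) = (vgrad (\<phi> n) x - G1 x) - (vgrad (\<psi> n) x - G2 x)"
        by (simp add: vd)
      then show "(norm (vgrad (\<lambda>x. \<phi> n x - \<psi> n x) x - (G1 x - G2 x)))\<^sup>2 \<le> 2 * (norm (vgrad (\<phi> n) x - G1 x))\<^sup>2 + 2 * (norm (vgrad (\<psi> n) x - G2 x))\<^sup>2"
        using sq_le2v by metis
    qed simp
    also have "\<dots> = 2 * (\<integral>x. (norm (vgrad (\<phi> n) x - G1 x))\<^sup>2 \<partial>?M) + 2 * (\<integral>x. (norm (vgrad (\<psi> n) x - G2 x))\<^sup>2 \<partial>?M)"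
      using i1 i2 by simp
    finally show "(\<integral>x. (norm (vgrad (\<lambda>x. \<phi> n x - \<psi> n x) x - (G1 x - G2 x)))\<^sup>2 \<partial>?M)
        \<le> 2 * (\<integral>x. (norm (vgrad (\<phi> n) x - G1 x))\<^sup>2 \<partial>?M) + 2 * (\<integral>x. (norm (vgrad (\<psi> n) x - G2 x))\<^sup>2 \<partial>?M)" .
  qed
  show ?thesis unfolding h0_grad_MD[OF D]
  proof (intro conjI exI[of _ "\<lambda>n x. \<phi> n x - \<psi> n x"])
    show "(\<lambda>x. h1 x - h2 x) \<in> borel_measurable ?M" using hm1 hm2 by measurable
    show "(\<lambda>x. G1 x - G2 x) \<in> borel_measurable ?M" using gm1 gm2 by measurable
    show "integrable ?M (\<lambda>x. (h1 x - h2 x)\<^sup>2)" by (rule sq_int_diff[OF hm1 hm2 hi1 hi2])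
    show "integrable ?M (\<lambda>x. (norm (G1 x - G2 x))\<^sup>2)" by (rule sq_int_diffv[OF gm1 gm2 gi1 gi2])
    show "\<forall>n. test_fun D (\<lambda>x. \<phi> n x - \<psi> n x)" using test_fun_diff t1 t2 by blast
  qed (use c1 c2 in auto)
qed

lemma h0_unique:
  fixes h :: "real^'n::finite \<Rightarrow> real"
  assumes D: "open D" and g1: "h0_grad D h G1" and g2: "h0_grad D h G2"
  shows "AE x in lebesgue_on D. G1 x = G2 x"
proof -
  have "h0_grad D (\<lambda>x. h x - h x) (\<lambda>x. G1 x - G2 x)" by (rule h0_diff[OF D g1 g2])
  from this[unfolded h0_grad_MD[OF D]] obtain ch where
    gm: "(\<lambda>x. G1 x - G2 x) \<in> borel_measurable (lebesgue_on D)"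
    and gi: "integrable (lebesgue_on D) (\<lambda>x. (norm (G1 x - G2 x))\<^sup>2)"
    and t: "\<And>n. test_fun D (ch n)"
    and a: "(\<lambda>n. \<integral>x. (ch n x - (h x - h x))\<^sup>2 \<partial>(lebesgue_on D)) \<longlonglongrightarrow> 0"
    and b: "(\<lambda>n. \<integral>x. (norm (vgrad (ch n) x - (G1 x - G2 x)))\<^sup>2 \<partial>(lebesgue_on D)) \<longlonglongrightarrow> 0"
    by blast
  have "AE x in lebesgue_on D. G1 x - G2 x = 0"
    by (rule closable[OF D t _ gm gi b]) (use a in simp)
  then show ?thesis by simp
qed

lemma wgrad_h0:
  assumes "H10 D h" shows "h0_grad D h (wgrad D h)"
proof -
  obtain G where "h0_grad D h G" using assms unfolding H10_def by blast
  then show ?thesis unfolding wgrad_def by (metis someI)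
qed

lemma H10_diff:
  fixes h1 h2 :: "real^'n::finite \<Rightarrow> real"
  assumes D: "open D" and "H10 D h1" "H10 D h2"
  shows "H10 D (\<lambda>x. h1 x - h2 x)"
  using h0_diff[OF D wgrad_h0[OF assms(2)] wgrad_h0[OF assms(3)]] unfolding H10_def by blast

lemma wgrad_diff:
  fixes h1 h2 :: "real^'n::finite \<Rightarrow> real"
  assumes D: "open D" and "H10 D h1" "H10 D h2"
  shows "AE x in lebesgue_on D. wgrad D (\<lambda>x. h1 x - h2 x) x = wgrad D h1 x - wgrad D h2 x"
  by (rule h0_unique[OF D wgrad_h0[OF H10_diff[OF assms]] h0_diff[OF D wgrad_h0[OF assms(2)] wgrad_h0[OF assms(3)]]])

lemma poinc_H10:
  fixes h :: "real^'n::finite \<Rightarrow> real"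
  assumes D: "open D" and R: "R > 0" "D \<subseteq> ball 0 R" and hg: "h0_grad D h G"
  shows "(\<integral>x. (h x)\<^sup>2 \<partial>(lebesgue_on D)) \<le> (2 * R)\<^sup>2 * (\<integral>x. (norm (G x))\<^sup>2 \<partial>(lebesgue_on D))"
proof -
  let ?M = "lebesgue_on D"
  from hg[unfolded h0_grad_MD[OF D]] obtain \<phi> where
    hm: "h \<in> borel_measurable ?M" and hi: "integrable ?M (\<lambda>x. (h x)\<^sup>2)"
    and gm: "G \<in> borel_measurable ?M" and gi: "integrable ?M (\<lambda>x. (norm (G x))\<^sup>2)"
    and t: "\<And>n. test_fun D (\<phi> n)"
    and a: "(\<lambda>n. \<integral>x. (\<phi> n x - h x)\<^sup>2 \<partial>?M) \<longlonglongrightarrow> 0"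
    and b: "(\<lambda>n. \<integral>x. (norm (vgrad (\<phi> n) x - G x))\<^sup>2 \<partial>?M) \<longlonglongrightarrow> 0"
    by blast
  note T = tf_M[OF D t]
  obtain i :: 'n where True by blast
  have pn: "(\<integral>x. (\<phi> n x)\<^sup>2 \<partial>?M) \<le> (2 * R)\<^sup>2 * (\<integral>x. (norm (vgrad (\<phi> n) x))\<^sup>2 \<partial>?M)" for n
  proof -
    note P = test_props[OF t[of n]]
    have c0: "continuous_on UNIV (\<lambda>x. (\<phi> n x)\<^sup>2)" using P(6) by (intro continuous_intros)
    have c1: "continuous_on UNIV (\<lambda>x. (norm (vgrad (\<phi> n) x))\<^sup>2)" using vgrad_cont[OF t[of n]] by (intro continuous_intros)
    have "(\<integral>x. (\<phi> n x)\<^sup>2 \<partial>?M) = (\<integral>x. (\<phi> n x)\<^sup>2 \<partial>lborel)"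
      by (rule lborel_MD[OF D]) (use borel_measurable_continuous_onI[OF c0] T(8) in auto)
    also have "\<dots> \<le> (2 * R)\<^sup>2 * (\<integral>x. (partial i (\<phi> n) x)\<^sup>2 \<partial>lborel)"
      by (rule poinc_test[OF P(4) P(7) P(1) P(3) R(1)]) (use P(2) R(2) in auto)
    also have "\<dots> \<le> (2 * R)\<^sup>2 * (\<integral>x. (norm (vgrad (\<phi> n) x))\<^sup>2 \<partial>lborel)"
    proof (rule mult_left_mono)
      show "(\<integral>x. (partial i (\<phi> n) x)\<^sup>2 \<partial>lborel) \<le> (\<integral>x. (norm (vgrad (\<phi> n) x))\<^sup>2 \<partial>lborel)"
      proof (rule int_mono_nn[OF T(7)])
        fix x
        have "\<bar>vgrad (\<phi> n) x $ i\<bar> \<le> norm (vgrad (\<phi> n) x)" by (rule component_le_norm_cart)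
        then have "\<bar>partial i (\<phi> n) x\<bar> \<le> norm (vgrad (\<phi> n) x)" by (simp add: vgrad_def)
        then have "\<bar>partial i (\<phi> n) x\<bar>\<^sup>2 \<le> (norm (vgrad (\<phi> n) x))\<^sup>2" by (rule power_mono) simp
        then show "(partial i (\<phi> n) x)\<^sup>2 \<le> (norm (vgrad (\<phi> n) x))\<^sup>2" by simp
      qed simp
    qed simp
    also have "(\<integral>x. (norm (vgrad (\<phi> n) x))\<^sup>2 \<partial>lborel) = (\<integral>x. (norm (vgrad (\<phi> n) x))\<^sup>2 \<partial>?M)"
      by (rule lborel_MD[OF D, symmetric]) (use borel_measurable_continuous_onI[OF c1] T(9) in auto)
    finally show ?thesis .
  qed
  have l1: "(\<lambda>n. \<integral>x. (\<phi> n x)\<^sup>2 \<partial>?M) \<longlonglongrightarrow> (\<integral>x. (h x)\<^sup>2 \<partial>?M)"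
    by (rule l2_conv[OF T(1) hm T(4) hi a])
  have l2: "(\<lambda>n. \<integral>x. (norm (vgrad (\<phi> n) x))\<^sup>2 \<partial>?M) \<longlonglongrightarrow> (\<integral>x. (norm (G x))\<^sup>2 \<partial>?M)"
    by (rule l2_convv[OF T(2) gm T(5) gi b])
  show ?thesis
    by (rule LIMSEQ_le[OF l1 tendsto_mult_left[OF l2]]) (use pn in auto)
qed

lemma comp_facts:
  fixes F :: "'b::euclidean_space \<Rightarrow> 'b" and A :: "'a \<Rightarrow> 'b"
  assumes cF: "continuous_on UNIV F" and lip: "\<And>u v. norm (F u - F v) \<le> L * norm (u - v)"
    and fin: "integrable M (\<lambda>_. 1::real)" and Am: "A \<in> borel_measurable M"
    and Ai: "integrable M (\<lambda>x. (norm (A x))\<^sup>2)"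
  shows "(\<lambda>x. F (A x)) \<in> borel_measurable M" "integrable M (\<lambda>x. (norm (F (A x)))\<^sup>2)"
    "(\<integral>x. (norm (F (A x)))\<^sup>2 \<partial>M) \<le> 2 * (norm (F 0))\<^sup>2 * (\<integral>x. 1 \<partial>M) + 2 * L\<^sup>2 * (\<integral>x. (norm (A x))\<^sup>2 \<partial>M)"
proof -
  show m: "(\<lambda>x. F (A x)) \<in> borel_measurable M"
    using measurable_compose[OF Am borel_measurable_continuous_onI[OF cF]] .
  have pw: "(norm (F a))\<^sup>2 \<le> 2 * (norm (F 0))\<^sup>2 * 1 + 2 * L\<^sup>2 * (norm a)\<^sup>2" for a
  proof -
    have "norm (F a) \<le> norm (F 0) + norm (F a - F 0)" by (rule norm_triangle_sub)
    also have "\<dots> \<le> norm (F 0) + L * norm a" using lip[of a 0] by simp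
    finally have "(norm (F a))\<^sup>2 \<le> (norm (F 0) + L * norm a)\<^sup>2" by (rule power_mono) simp
    also have "\<dots> \<le> 2 * (norm (F 0))\<^sup>2 + 2 * (L * norm a)\<^sup>2" using sq_le2[of "norm (F 0)" "- L * norm a"] by simp
    finally show ?thesis by (simp add: power_mult_distrib)
  qed
  have bi: "integrable M (\<lambda>x. 2 * (norm (F 0))\<^sup>2 * 1 + 2 * L\<^sup>2 * (norm (A x))\<^sup>2)"
    by (rule Bochner_Integration.integrable_add[OF integrable_mult_right[OF fin] integrable_mult_right[OF Ai]])
  show i: "integrable M (\<lambda>x. (norm (F (A x)))\<^sup>2)"
    by (rule Bochner_Integration.integrable_bound[OF bi]) (use m pw in \<open>auto intro!: AE_I2\<close>)
  have "(\<integral>x. (norm (F (A x)))\<^sup>2 \<partial>M) \<le> (\<integral>x. 2 * (norm (F 0))\<^sup>2 * 1 + 2 * L\<^sup>2 * (norm (A x))\<^sup>2 \<partial>M)"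
    by (rule integral_mono[OF i bi]) (rule pw)
  also have "\<dots> = 2 * (norm (F 0))\<^sup>2 * (\<integral>x. 1 \<partial>M) + 2 * L\<^sup>2 * (\<integral>x. (norm (A x))\<^sup>2 \<partial>M)"
    by (subst Bochner_Integration.integral_add[OF integrable_mult_right[OF fin] integrable_mult_right[OF Ai]]) simp
  finally show "(\<integral>x. (norm (F (A x)))\<^sup>2 \<partial>M) \<le> 2 * (norm (F 0))\<^sup>2 * (\<integral>x. 1 \<partial>M) + 2 * L\<^sup>2 * (\<integral>x. (norm (A x))\<^sup>2 \<partial>M)" .
qed

lemma sq_int_addv:
  fixes f g :: "'a \<Rightarrow> 'b::euclidean_space"
  assumes "f \<in> borel_measurable M" "g \<in> borel_measurable M"
   and "integrable M (\<lambda>x. (norm (f x))\<^sup>2)" "integrable M (\<lambda>x. (norm (g x))\<^sup>2)"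
  shows "integrable M (\<lambda>x. (norm (f x + g x))\<^sup>2)"
    "(\<integral>x. (norm (f x + g x))\<^sup>2 \<partial>M) \<le> 2 * (\<integral>x. (norm (f x))\<^sup>2 \<partial>M) + 2 * (\<integral>x. (norm (g x))\<^sup>2 \<partial>M)"
proof -
  have m: "(\<lambda>x. - g x) \<in> borel_measurable M" using assms(2) by measurable
  have "integrable M (\<lambda>x. (norm (f x - (- g x)))\<^sup>2)"
    by (rule sq_int_diffv[OF assms(1) m assms(3)]) (use assms(4) in simp)
  then show i: "integrable M (\<lambda>x. (norm (f x + g x))\<^sup>2)" by simp
  have "(\<integral>x. (norm (f x + g x))\<^sup>2 \<partial>M) \<le> (\<integral>x. 2 * (norm (f x))\<^sup>2 + 2 * (norm (g x))\<^sup>2 \<partial>M)"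
  proof (rule integral_mono[OF i])
    show "integrable M (\<lambda>x. 2 * (norm (f x))\<^sup>2 + 2 * (norm (g x))\<^sup>2)" using assms by simp
    fix x show "(norm (f x + g x))\<^sup>2 \<le> 2 * (norm (f x))\<^sup>2 + 2 * (norm (g x))\<^sup>2"
      using sq_le2v[of "f x" "- g x"] by simp
  qed
  also have "\<dots> = 2 * (\<integral>x. (norm (f x))\<^sup>2 \<partial>M) + 2 * (\<integral>x. (norm (g x))\<^sup>2 \<partial>M)"
    using assms by simp
  finally show "(\<integral>x. (norm (f x + g x))\<^sup>2 \<partial>M) \<le> 2 * (\<integral>x. (norm (f x))\<^sup>2 \<partial>M) + 2 * (\<integral>x. (norm (g x))\<^sup>2 \<partial>M)" .
qed

lemma sqrt_add_le: "0 \<le> a \<Longrightarrow> 0 \<le> b \<Longrightarrow> sqrt (a + b) \<le> sqrt a + sqrt (b::real)"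
proof -
  assume a: "0 \<le> a" and b: "0 \<le> b"
  have "(sqrt a + sqrt b)\<^sup>2 = a + b + 2 * (sqrt a * sqrt b)" using a b
    by (simp add: power2_eq_square algebra_simps)
  moreover have "0 \<le> sqrt a * sqrt b" using a b by simp
  ultimately have "a + b \<le> (sqrt a + sqrt b)\<^sup>2" by linarith
  then have "sqrt (a + b) \<le> sqrt ((sqrt a + sqrt b)\<^sup>2)" by (rule real_sqrt_le_mono)
  also have "\<dots> = sqrt a + sqrt b" using a b by simp
  finally show ?thesis .
qed

lemma amgm: "c > 0 \<Longrightarrow> x * y \<le> c / 2 * x\<^sup>2 + y\<^sup>2 / (2 * (c::real))"
proof -
  assume c: "c > 0"
  have "0 \<le> (c * x - y)\<^sup>2" by simp
  then have "2 * c * (x * y) \<le> c * c * x\<^sup>2 + y\<^sup>2" by (simp add: power2_eq_square algebra_simps)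
  then have "x * y \<le> (c * c * x\<^sup>2 + y\<^sup>2) / (2 * c)" using c by (simp add: pos_le_divide_eq mult_ac)
  also have "(c * c * x\<^sup>2 + y\<^sup>2) / (2 * c) = c / 2 * x\<^sup>2 + y\<^sup>2 / (2 * c)"
    using c by (simp add: add_divide_distrib)
  finally show ?thesis .
qed

lemma pw_coerc:
  assumes c: "cm > 0" and mon: "cm * (norm ((a + b) - b))\<^sup>2 \<le> (F (a + b) - F b) \<bullet> ((a + b) - b)"
  shows "cm / 2 * (norm a)\<^sup>2 - (norm (F b))\<^sup>2 / (2 * cm) \<le> F (a + b) \<bullet> (a::'a::real_inner)"
proof -
  have 1: "cm * (norm a)\<^sup>2 \<le> F (a + b) \<bullet> a - F b \<bullet> a" using mon by (simp add: inner_diff_left)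
  have "- (F b \<bullet> a) \<le> norm (F b) * norm a" using Cauchy_Schwarz_ineq2[of "F b" a] by linarith
  also have "\<dots> = norm a * norm (F b)" by simp
  also have "\<dots> \<le> cm / 2 * (norm a)\<^sup>2 + (norm (F b))\<^sup>2 / (2 * cm)" by (rule amgm[OF c])
  finally show ?thesis using 1 by linarith
qed


lemma Hfacts:
  fixes h :: "real^'n::finite \<Rightarrow> real"
  assumes Do: "open D" and h: "H10 D h"
  shows "h \<in> borel_measurable (lebesgue_on D)" "integrable (lebesgue_on D) (\<lambda>x. (h x)\<^sup>2)"
    "wgrad D h \<in> borel_measurable (lebesgue_on D)" "integrable (lebesgue_on D) (\<lambda>x. (norm (wgrad D h x))\<^sup>2)"
  using wgrad_h0[OF h] unfolding h0_grad_MD[OF Do] by blast+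

lemma Ap_M:
  assumes Do: "open D"
  shows "Apair D \<sigma> f h g = - (\<integral>x. vgrad \<sigma> (wgrad D h x + wgrad D f x) \<bullet> wgrad D g x \<partial>(lebesgue_on D))"
  unfolding Apair_def by (simp add: setint_MD[OF Do])

lemma NV_M:
  fixes h :: "real^'n::finite \<Rightarrow> real"
  assumes Do: "open D"
  shows "(normV D h)\<^sup>2 = (\<integral>x. (h x)\<^sup>2 \<partial>(lebesgue_on D)) + (\<integral>x. (norm (wgrad D h x))\<^sup>2 \<partial>(lebesgue_on D))"
    "sqrt (\<integral>x. (norm (wgrad D h x))\<^sup>2 \<partial>(lebesgue_on D)) \<le> normV D h"
    "0 \<le> normV D h"
proof -
  have a: "0 \<le> (\<integral>x. (h x)\<^sup>2 \<partial>(lebesgue_on D))" and b: "0 \<le> (\<integral>x. (norm (wgrad D h x))\<^sup>2 \<partial>(lebesgue_on D))"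
    by simp_all
  have e: "normV D h = sqrt ((\<integral>x. (h x)\<^sup>2 \<partial>(lebesgue_on D)) + (\<integral>x. (norm (wgrad D h x))\<^sup>2 \<partial>(lebesgue_on D)))"
    unfolding normV_def by (simp add: setint_MD[OF Do])
  show "(normV D h)\<^sup>2 = (\<integral>x. (h x)\<^sup>2 \<partial>(lebesgue_on D)) + (\<integral>x. (norm (wgrad D h x))\<^sup>2 \<partial>(lebesgue_on D))"
    unfolding e using a b by simp
  show "sqrt (\<integral>x. (norm (wgrad D h x))\<^sup>2 \<partial>(lebesgue_on D)) \<le> normV D h"
    unfolding e using a by (intro real_sqrt_le_mono) simp
  show "0 \<le> normV D h" unfolding e by simp
qed

lemma Afacts:
  fixes h f :: "real^'n::finite \<Rightarrow> real"
  assumes Do: "open D" and cF: "continuous_on UNIV (vgrad \<sigma>)"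
    and lip: "\<And>u v. norm (vgrad \<sigma> u - vgrad \<sigma> v) \<le> L * norm (u - v)"
    and fin: "integrable (lebesgue_on D) (\<lambda>_. 1::real)" and h: "H10 D h" and f: "H10 D f"
  shows "(\<lambda>x. vgrad \<sigma> (wgrad D h x + wgrad D f x)) \<in> borel_measurable (lebesgue_on D)"
    "integrable (lebesgue_on D) (\<lambda>x. (norm (vgrad \<sigma> (wgrad D h x + wgrad D f x)))\<^sup>2)"
    "(\<integral>x. (norm (vgrad \<sigma> (wgrad D h x + wgrad D f x)))\<^sup>2 \<partial>(lebesgue_on D))
      \<le> 2 * (norm (vgrad \<sigma> 0))\<^sup>2 * (\<integral>x. 1 \<partial>(lebesgue_on D))
        + 2 * L\<^sup>2 * (2 * (\<integral>x. (norm (wgrad D h x))\<^sup>2 \<partial>(lebesgue_on D)) + 2 * (\<integral>x. (norm (wgrad D f x))\<^sup>2 \<partial>(lebesgue_on D)))"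
proof -
  note H = Hfacts[OF Do h] and Fh = Hfacts[OF Do f]
  have Am: "(\<lambda>x. wgrad D h x + wgrad D f x) \<in> borel_measurable (lebesgue_on D)" using H(3) Fh(3) by measurable
  note S = sq_int_addv[OF H(3) Fh(3) H(4) Fh(4)]
  note C = comp_facts[OF cF lip fin Am S(1)]
  show "(\<lambda>x. vgrad \<sigma> (wgrad D h x + wgrad D f x)) \<in> borel_measurable (lebesgue_on D)" by (rule C(1))
  show "integrable (lebesgue_on D) (\<lambda>x. (norm (vgrad \<sigma> (wgrad D h x + wgrad D f x)))\<^sup>2)" by (rule C(2))
  have "2 * L\<^sup>2 * (\<integral>x. (norm (wgrad D h x + wgrad D f x))\<^sup>2 \<partial>(lebesgue_on D))
     \<le> 2 * L\<^sup>2 * (2 * (\<integral>x. (norm (wgrad D h x))\<^sup>2 \<partial>(lebesgue_on D)) + 2 * (\<integral>x. (norm (wgrad D f x))\<^sup>2 \<partial>(lebesgue_on D)))"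
    using S(2) by (intro mult_left_mono) auto
  then show "(\<integral>x. (norm (vgrad \<sigma> (wgrad D h x + wgrad D f x)))\<^sup>2 \<partial>(lebesgue_on D))
      \<le> 2 * (norm (vgrad \<sigma> 0))\<^sup>2 * (\<integral>x. 1 \<partial>(lebesgue_on D))
        + 2 * L\<^sup>2 * (2 * (\<integral>x. (norm (wgrad D h x))\<^sup>2 \<partial>(lebesgue_on D)) + 2 * (\<integral>x. (norm (wgrad D f x))\<^sup>2 \<partial>(lebesgue_on D)))"
    using C(3) by linarith
qed


lemma part1:
  fixes D :: "(real^'n::finite) set" and f h1 h2 :: "real^'n \<Rightarrow> real"
  assumes Do: "open D" and cF: "continuous_on UNIV (vgrad \<sigma>)"
    and lip: "\<And>u v. norm (vgrad \<sigma> u - vgrad \<sigma> v) \<le> L * norm (u - v)"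
    and fin: "integrable (lebesgue_on D) (\<lambda>_. 1::real)" and f: "H10 D f"
    and cm: "cm > 0" and mon: "\<And>u v. cm * (norm (u - v))\<^sup>2 \<le> (vgrad \<sigma> u - vgrad \<sigma> v) \<bullet> (u - v)"
    and h1: "H10 D h1" and h2: "H10 D h2"
  shows "Apair D \<sigma> f h1 (\<lambda>x. h1 x - h2 x) - Apair D \<sigma> f h2 (\<lambda>x. h1 x - h2 x) \<le> 0"
proof -
  let ?M = "lebesgue_on D" and ?w = "\<lambda>x. h1 x - h2 x"
  let ?A1 = "\<lambda>x. vgrad \<sigma> (wgrad D h1 x + wgrad D f x)" and ?A2 = "\<lambda>x. vgrad \<sigma> (wgrad D h2 x + wgrad D f x)"
  have hw: "H10 D ?w" by (rule H10_diff[OF Do h1 h2])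
  note W = Hfacts[OF Do hw]
  note A1 = Afacts[OF Do cF lip fin h1 f] and A2 = Afacts[OF Do cF lip fin h2 f]
  have i1: "integrable ?M (\<lambda>x. ?A1 x \<bullet> wgrad D ?w x)" by (rule l2_csv(1)[OF A1(1) W(3) A1(2) W(4)])
  have i2: "integrable ?M (\<lambda>x. ?A2 x \<bullet> wgrad D ?w x)" by (rule l2_csv(1)[OF A2(1) W(3) A2(2) W(4)])
  have "Apair D \<sigma> f h1 ?w - Apair D \<sigma> f h2 ?w
      = - ((\<integral>x. ?A1 x \<bullet> wgrad D ?w x \<partial>?M) - (\<integral>x. ?A2 x \<bullet> wgrad D ?w x \<partial>?M))"
    by (simp add: Ap_M[OF Do])
  also have "(\<integral>x. ?A1 x \<bullet> wgrad D ?w x \<partial>?M) - (\<integral>x. ?A2 x \<bullet> wgrad D ?w x \<partial>?M)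
      = (\<integral>x. ?A1 x \<bullet> wgrad D ?w x - ?A2 x \<bullet> wgrad D ?w x \<partial>?M)"
    using i1 i2 by simp
  also have "\<dots> = (\<integral>x. (?A1 x - ?A2 x) \<bullet> wgrad D ?w x \<partial>?M)"
    by (simp add: inner_diff_left)
  finally have eq: "Apair D \<sigma> f h1 ?w - Apair D \<sigma> f h2 ?w = - (\<integral>x. (?A1 x - ?A2 x) \<bullet> wgrad D ?w x \<partial>?M)" .
  have "0 \<le> (\<integral>x. (?A1 x - ?A2 x) \<bullet> wgrad D ?w x \<partial>?M)"
  proof (rule integral_nonneg_AE)
    show "AE x in ?M. 0 \<le> (?A1 x - ?A2 x) \<bullet> wgrad D ?w x"
      using wgrad_diff[OF Do h1 h2]
    proof eventually_elim
      case (elim x)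
      let ?u = "wgrad D h1 x + wgrad D f x" and ?v = "wgrad D h2 x + wgrad D f x"
      have "0 \<le> cm * (norm (?u - ?v))\<^sup>2" using cm by simp
      also have "\<dots> \<le> (vgrad \<sigma> ?u - vgrad \<sigma> ?v) \<bullet> (?u - ?v)" by (rule mon)
      also have "?u - ?v = wgrad D ?w x" using elim by simp
      finally show ?case .
    qed
  qed
  then show ?thesis using eq by linarith
qed


lemma part2:
  fixes D :: "(real^'n::finite) set" and f h g :: "real^'n \<Rightarrow> real" and hs :: "nat \<Rightarrow> real^'n \<Rightarrow> real"
  assumes Do: "open D" and cF: "continuous_on UNIV (vgrad \<sigma>)"
    and lip: "\<And>u v. norm (vgrad \<sigma> u - vgrad \<sigma> v) \<le> L * norm (u - v)"
    and fin: "integrable (lebesgue_on D) (\<lambda>_. 1::real)" and f: "H10 D f"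
    and h: "H10 D h" and hs: "\<And>n. H10 D (hs n)" and g: "H10 D g"
    and conv: "(\<lambda>n. normV D (\<lambda>x. hs n x - h x)) \<longlonglongrightarrow> 0"
  shows "(\<lambda>n. Apair D \<sigma> f (hs n) g) \<longlonglongrightarrow> Apair D \<sigma> f h g"
proof -
  let ?M = "lebesgue_on D"
  define e where "e n = (\<integral>x. (norm (wgrad D (hs n) x - wgrad D h x))\<^sup>2 \<partial>?M)" for n
  note Hh = Hfacts[OF Do h] and Hg = Hfacts[OF Do g]
  have e_le: "e n \<le> (normV D (\<lambda>x. hs n x - h x))\<^sup>2" for n
  proof -
    note Hn = Hfacts[OF Do hs[of n]]
    note Hd = Hfacts[OF Do H10_diff[OF Do hs[of n] h]]
    have "e n = (\<integral>x. (norm (wgrad D (\<lambda>x. hs n x - h x) x))\<^sup>2 \<partial>?M)"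
      unfolding e_def
    proof (rule integral_cong_AE)
      show "(\<lambda>x. (norm (wgrad D (hs n) x - wgrad D h x))\<^sup>2) \<in> borel_measurable ?M"
        using Hn(3) Hh(3) by measurable
      show "(\<lambda>x. (norm (wgrad D (\<lambda>x. hs n x - h x) x))\<^sup>2) \<in> borel_measurable ?M"
        using Hd(3) by measurable
      show "AE x in ?M. (norm (wgrad D (hs n) x - wgrad D h x))\<^sup>2 = (norm (wgrad D (\<lambda>x. hs n x - h x) x))\<^sup>2"
        using wgrad_diff[OF Do hs[of n] h] by eventually_elim simp
    qed
    also have "\<dots> \<le> (normV D (\<lambda>x. hs n x - h x))\<^sup>2"
      unfolding NV_M(1)[OF Do] by simp
    finally show ?thesis .
  qed
  have e0: "e \<longlonglongrightarrow> 0"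
  proof (rule tendsto_sandwich[of "\<lambda>_. 0" _ _ "\<lambda>n. (normV D (\<lambda>x. hs n x - h x))\<^sup>2"])
    show "\<forall>\<^sub>F n in sequentially. 0 \<le> e n" by (simp add: e_def)
    show "\<forall>\<^sub>F n in sequentially. e n \<le> (normV D (\<lambda>x. hs n x - h x))\<^sup>2" using e_le by simp
    show "(\<lambda>n. (normV D (\<lambda>x. hs n x - h x))\<^sup>2) \<longlonglongrightarrow> 0" using tendsto_power[OF conv, of 2] by simp
  qed simp
  let ?c = "sqrt (\<integral>x. (norm (wgrad D g x))\<^sup>2 \<partial>?M)"
  have "(\<lambda>n. Apair D \<sigma> f (hs n) g - Apair D \<sigma> f h g) \<longlonglongrightarrow> 0"
  proof (rule Lim_null_comparison)
    show "(\<lambda>n. sqrt (L\<^sup>2 * e n) * ?c) \<longlonglongrightarrow> 0"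
      using tendsto_mult[OF tendsto_real_sqrt[OF tendsto_mult[OF tendsto_const e0]] tendsto_const, of "L\<^sup>2" ?c]
      by simp
    show "\<forall>\<^sub>F n in sequentially. norm (Apair D \<sigma> f (hs n) g - Apair D \<sigma> f h g) \<le> sqrt (L\<^sup>2 * e n) * ?c"
    proof (intro always_eventually allI)
      fix n
      note Hn = Hfacts[OF Do hs[of n]]
      note An = Afacts[OF Do cF lip fin hs[of n] f] and Ah = Afacts[OF Do cF lip fin h f]
      let ?Pn = "\<lambda>x. vgrad \<sigma> (wgrad D (hs n) x + wgrad D f x)" and ?P = "\<lambda>x. vgrad \<sigma> (wgrad D h x + wgrad D f x)"
      let ?Phi = "\<lambda>x. ?Pn x - ?P x"
      have i1: "integrable ?M (\<lambda>x. ?Pn x \<bullet> wgrad D g x)" by (rule l2_csv(1)[OF An(1) Hg(3) An(2) Hg(4)])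
      have i2: "integrable ?M (\<lambda>x. ?P x \<bullet> wgrad D g x)" by (rule l2_csv(1)[OF Ah(1) Hg(3) Ah(2) Hg(4)])
      have "Apair D \<sigma> f (hs n) g - Apair D \<sigma> f h g = - ((\<integral>x. ?Pn x \<bullet> wgrad D g x \<partial>?M) - (\<integral>x. ?P x \<bullet> wgrad D g x \<partial>?M))"
        by (simp add: Ap_M[OF Do])
      also have "(\<integral>x. ?Pn x \<bullet> wgrad D g x \<partial>?M) - (\<integral>x. ?P x \<bullet> wgrad D g x \<partial>?M)
          = (\<integral>x. ?Pn x \<bullet> wgrad D g x - ?P x \<bullet> wgrad D g x \<partial>?M)" using i1 i2 by simp
      also have "\<dots> = (\<integral>x. ?Phi x \<bullet> wgrad D g x \<partial>?M)" by (simp add: inner_diff_left)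
      finally have eq: "Apair D \<sigma> f (hs n) g - Apair D \<sigma> f h g = - (\<integral>x. ?Phi x \<bullet> wgrad D g x \<partial>?M)" .
      have Pm: "?Phi \<in> borel_measurable ?M" using An(1) Ah(1) by measurable
      have pw: "(norm (?Phi x))\<^sup>2 \<le> L\<^sup>2 * (norm (wgrad D (hs n) x - wgrad D h x))\<^sup>2" for x
      proof -
        have "norm (?Phi x) \<le> L * norm ((wgrad D (hs n) x + wgrad D f x) - (wgrad D h x + wgrad D f x))" by (rule lip)
        also have "\<dots> = L * norm (wgrad D (hs n) x - wgrad D h x)" by simp
        finally have "(norm (?Phi x))\<^sup>2 \<le> (L * norm (wgrad D (hs n) x - wgrad D h x))\<^sup>2" by (rule power_mono) simp
        then show ?thesis by (simp add: power_mult_distrib)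
      qed
      have di: "integrable ?M (\<lambda>x. (norm (wgrad D (hs n) x - wgrad D h x))\<^sup>2)"
        by (rule sq_int_diffv[OF Hn(3) Hh(3) Hn(4) Hh(4)])
      have bi: "integrable ?M (\<lambda>x. L\<^sup>2 * (norm (wgrad D (hs n) x - wgrad D h x))\<^sup>2)" using di by simp
      have Pi: "integrable ?M (\<lambda>x. (norm (?Phi x))\<^sup>2)"
        by (rule Bochner_Integration.integrable_bound[OF bi]) (use Pm pw in \<open>auto intro!: AE_I2\<close>)
      have "(\<integral>x. (norm (?Phi x))\<^sup>2 \<partial>?M) \<le> (\<integral>x. L\<^sup>2 * (norm (wgrad D (hs n) x - wgrad D h x))\<^sup>2 \<partial>?M)"
        by (rule integral_mono[OF Pi bi pw])
      also have "\<dots> = L\<^sup>2 * e n" by (simp add: e_def)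
      finally have Pl: "(\<integral>x. (norm (?Phi x))\<^sup>2 \<partial>?M) \<le> L\<^sup>2 * e n" .
      have "norm (Apair D \<sigma> f (hs n) g - Apair D \<sigma> f h g) = \<bar>\<integral>x. ?Phi x \<bullet> wgrad D g x \<partial>?M\<bar>"
        unfolding eq by simp
      also have "\<dots> \<le> sqrt (\<integral>x. (norm (?Phi x))\<^sup>2 \<partial>?M) * ?c" by (rule l2_csv(2)[OF Pm Hg(3) Pi Hg(4)])
      also have "\<dots> \<le> sqrt (L\<^sup>2 * e n) * ?c"
        by (intro mult_right_mono real_sqrt_le_mono Pl) simp
      finally show "norm (Apair D \<sigma> f (hs n) g - Apair D \<sigma> f h g) \<le> sqrt (L\<^sup>2 * e n) * ?c" .
    qed
  qed
  then show ?thesis by (simp add: Lim_null[symmetric])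
qed


lemma part3:
  fixes D :: "(real^'n::finite) set" and f :: "real^'n \<Rightarrow> real"
  assumes Do: "open D" and cF: "continuous_on UNIV (vgrad \<sigma>)"
    and lip: "\<And>u v. norm (vgrad \<sigma> u - vgrad \<sigma> v) \<le> L * norm (u - v)" and L: "L > 0"
    and fin: "integrable (lebesgue_on D) (\<lambda>_. 1::real)" and f: "H10 D f"
    and cm: "cm > 0" and mon: "\<And>u v. cm * (norm (u - v))\<^sup>2 \<le> (vgrad \<sigma> u - vgrad \<sigma> v) \<bullet> (u - v)"
    and R: "R > 0" "D \<subseteq> ball 0 R"
  shows "\<exists>C1 C2 C3. C1 > 0 \<and> C2 > 0 \<and> C3 > 0 \<and>
            (\<forall>h. H10 D h \<longrightarrow> Apair D \<sigma> f h h \<le> - C1 * (normV D h)\<^sup>2 + C2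
               \<and> (\<forall>g. H10 D g \<longrightarrow> \<bar>Apair D \<sigma> f h g\<bar> \<le> C3 * (normV D h + 1) * normV D g))"
proof -
  let ?M = "lebesgue_on D" and ?F = "vgrad \<sigma>"
  define P where "P = (2 * R)\<^sup>2"
  have P0: "P > 0" using R by (simp add: P_def)
  note Hf = Hfacts[OF Do f]
  note CFf = comp_facts[OF cF lip fin Hf(3) Hf(4)]
  define Q where "Q = (\<integral>x. (norm (?F (wgrad D f x)))\<^sup>2 \<partial>?M)"
  define mu where "mu = (\<integral>x. (1::real) \<partial>?M)"
  define Qf where "Qf = (\<integral>x. (norm (wgrad D f x))\<^sup>2 \<partial>?M)"
  define K1 where "K1 = 2 * (norm (?F 0))\<^sup>2 * mu + 2 * L\<^sup>2 * (2 * Qf)"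
  have mu0: "mu \<ge> 0" by (simp add: mu_def)
  have Qf0: "Qf \<ge> 0" by (simp add: Qf_def)
  have K10: "K1 \<ge> 0" using mu0 Qf0 by (simp add: K1_def)
  define C1 where "C1 = cm / (2 * (P + 1))"
  define C2 where "C2 = Q / (2 * cm) + 1"
  define C3 where "C3 = sqrt K1 + 2 * L + 1"
  have Q0: "Q \<ge> 0" by (simp add: Q_def)
  have pos: "C1 > 0" "C2 > 0" "C3 > 0" using cm P0 Q0 L K10 by (auto simp: C1_def C2_def C3_def add_nonneg_pos)
  have main: "Apair D \<sigma> f h h \<le> - C1 * (normV D h)\<^sup>2 + C2
       \<and> (\<forall>g. H10 D g \<longrightarrow> \<bar>Apair D \<sigma> f h g\<bar> \<le> C3 * (normV D h + 1) * normV D g)" if h: "H10 D h" for h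
  proof
    note Hh = Hfacts[OF Do h] and Ah = Afacts[OF Do cF lip fin h f]
    let ?I = "\<integral>x. (norm (wgrad D h x))\<^sup>2 \<partial>?M"
    have I0: "?I \<ge> 0" by simp
    have nv: "(normV D h)\<^sup>2 \<le> (P + 1) * ?I"
    proof -
      have "(\<integral>x. (h x)\<^sup>2 \<partial>?M) \<le> P * ?I" unfolding P_def by (rule poinc_H10[OF Do R wgrad_h0[OF h]])
      then show ?thesis unfolding NV_M(1)[OF Do] by (simp add: algebra_simps)
    qed
    have Xi: "integrable ?M (\<lambda>x. ?F (wgrad D h x + wgrad D f x) \<bullet> wgrad D h x)"
      by (rule l2_csv(1)[OF Ah(1) Hh(3) Ah(2) Hh(4)])
    have Yi: "integrable ?M (\<lambda>x. cm / 2 * (norm (wgrad D h x))\<^sup>2 - (norm (?F (wgrad D f x)))\<^sup>2 / (2 * cm))"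
      using Hh(4) CFf(2) by simp
    have "(\<integral>x. cm / 2 * (norm (wgrad D h x))\<^sup>2 - (norm (?F (wgrad D f x)))\<^sup>2 / (2 * cm) \<partial>?M)
        \<le> (\<integral>x. ?F (wgrad D h x + wgrad D f x) \<bullet> wgrad D h x \<partial>?M)"
    proof (rule integral_mono[OF Yi Xi])
      fix x
      show "cm / 2 * (norm (wgrad D h x))\<^sup>2 - (norm (?F (wgrad D f x)))\<^sup>2 / (2 * cm)
          \<le> ?F (wgrad D h x + wgrad D f x) \<bullet> wgrad D h x"
        by (rule pw_coerc[OF cm mon])
    qed
    also have "(\<integral>x. cm / 2 * (norm (wgrad D h x))\<^sup>2 - (norm (?F (wgrad D f x)))\<^sup>2 / (2 * cm) \<partial>?M)
        = cm / 2 * ?I - Q / (2 * cm)"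
      using Hh(4) CFf(2) by (simp add: Q_def)
    finally have lo: "cm / 2 * ?I - Q / (2 * cm) \<le> (\<integral>x. ?F (wgrad D h x + wgrad D f x) \<bullet> wgrad D h x \<partial>?M)" .
    have "C1 * (normV D h)\<^sup>2 \<le> C1 * ((P + 1) * ?I)"
      using nv pos by (intro mult_left_mono) auto
    also have "\<dots> = cm / 2 * ?I" using P0 by (simp add: C1_def field_simps)
    finally have c1: "C1 * (normV D h)\<^sup>2 \<le> cm / 2 * ?I" .
    show "Apair D \<sigma> f h h \<le> - C1 * (normV D h)\<^sup>2 + C2"
      using lo c1 unfolding Ap_M[OF Do] C2_def by linarith
    show "\<forall>g. H10 D g \<longrightarrow> \<bar>Apair D \<sigma> f h g\<bar> \<le> C3 * (normV D h + 1) * normV D g"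
    proof (intro allI impI)
      fix g assume g: "H10 D g"
      note Hg = Hfacts[OF Do g]
      let ?n = "normV D h"
      have n0: "?n \<ge> 0" by (rule NV_M(3)[OF Do])
      have In: "?I \<le> ?n\<^sup>2" unfolding NV_M(1)[OF Do] by simp
      have "(\<integral>x. (norm (?F (wgrad D h x + wgrad D f x)))\<^sup>2 \<partial>?M) \<le> K1 + 4 * L\<^sup>2 * ?I"
        using Ah(3) by (simp add: K1_def mu_def Qf_def algebra_simps)
      also have "\<dots> \<le> K1 + (2 * L * ?n)\<^sup>2"
      proof -
        have "4 * L\<^sup>2 * ?I \<le> 4 * L\<^sup>2 * ?n\<^sup>2" using In by (intro mult_left_mono) auto
        then show ?thesis by (simp add: power_mult_distrib)
      qed
      finally have "sqrt (\<integral>x. (norm (?F (wgrad D h x + wgrad D f x)))\<^sup>2 \<partial>?M) \<le> sqrt (K1 + (2 * L * ?n)\<^sup>2)"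
        by (rule real_sqrt_le_mono)
      also have "\<dots> \<le> sqrt K1 + sqrt ((2 * L * ?n)\<^sup>2)" by (rule sqrt_add_le[OF K10]) simp
      also have "\<dots> = sqrt K1 + 2 * L * ?n" using L n0 by simp
      also have "\<dots> \<le> C3 * (?n + 1)"
      proof -
        have "C3 * (?n + 1) = sqrt K1 * ?n + sqrt K1 + 2 * L * ?n + 2 * L + ?n + 1"
          by (simp add: C3_def algebra_simps)
        moreover have "0 \<le> sqrt K1 * ?n" using n0 K10 by simp
        ultimately show ?thesis using L n0 by linarith
      qed
      finally have s1: "sqrt (\<integral>x. (norm (?F (wgrad D h x + wgrad D f x)))\<^sup>2 \<partial>?M) \<le> C3 * (?n + 1)" .
      have s2: "sqrt (\<integral>x. (norm (wgrad D g x))\<^sup>2 \<partial>?M) \<le> normV D g" by (rule NV_M(2)[OF Do])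
      have "\<bar>Apair D \<sigma> f h g\<bar> = \<bar>\<integral>x. ?F (wgrad D h x + wgrad D f x) \<bullet> wgrad D g x \<partial>?M\<bar>"
        unfolding Ap_M[OF Do] by simp
      also have "\<dots> \<le> sqrt (\<integral>x. (norm (?F (wgrad D h x + wgrad D f x)))\<^sup>2 \<partial>?M) * sqrt (\<integral>x. (norm (wgrad D g x))\<^sup>2 \<partial>?M)"
        by (rule l2_csv(2)[OF Ah(1) Hg(3) Ah(2) Hg(4)])
      also have "\<dots> \<le> C3 * (?n + 1) * normV D g"
        by (rule mult_mono[OF s1 s2]) (use pos n0 in auto)
      finally show "\<bar>Apair D \<sigma> f h g\<bar> \<le> C3 * (normV D h + 1) * normV D g" .
    qed
  qed
  show ?thesis using pos main by blast
qed

theorem lemma3p4: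
  fixes D :: "(real^'n::finite) set" and V :: "real \<Rightarrow> real"
    and \<sigma> :: "real^'n \<Rightarrow> real" and cm cp :: real
    and f :: "real^'n \<Rightarrow> real"
  assumes D: "open D" "bounded D" "connected D" "D \<noteq> {}" "lipschitz_boundary D"
    and V: "\<forall>x. V differentiable (at x)" "\<forall>x. deriv V differentiable (at x)"
      "continuous_on UNIV (deriv (deriv V))" "\<forall>x. V (- x) = V x"
      "cm > 0" "cp > 0" "\<forall>x. cm \<le> deriv (deriv V) x \<and> deriv (deriv V) x \<le> cp"
    and sig: "\<sigma> = surface_tension V"
      "\<forall>u. \<sigma> differentiable (at u)" "continuous_on UNIV (vgrad \<sigma>)"
      "\<forall>u v. cm * (norm (u - v))\<^sup>2 \<le> (vgrad \<sigma> u - vgrad \<sigma> v) \<bullet> (u - v)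
           \<and> (vgrad \<sigma> u - vgrad \<sigma> v) \<bullet> (u - v) \<le> cp * (norm (u - v))\<^sup>2"
    and f: "H10 D f"
  shows "(\<forall>h1\<in>Vsp D. \<forall>h2\<in>Vsp D.
            Apair D \<sigma> f h1 (\<lambda>x. h1 x - h2 x) - Apair D \<sigma> f h2 (\<lambda>x. h1 x - h2 x) \<le> 0)
       \<and> (\<forall>h\<in>Vsp D. \<forall>hs. (\<forall>n. hs n \<in> Vsp D) \<and> (\<lambda>n. normV D (\<lambda>x. hs n x - h x)) \<longlonglongrightarrow> 0
            \<longrightarrow> (\<forall>g\<in>Vsp D. (\<lambda>n. Apair D \<sigma> f (hs n) g) \<longlonglongrightarrow> Apair D \<sigma> f h g))
       \<and> (\<exists>C1 C2 C3. C1 > 0 \<and> C2 > 0 \<and> C3 > 0 \<and>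
            (\<forall>h\<in>Vsp D. Apair D \<sigma> f h h \<le> - C1 * (normV D h)\<^sup>2 + C2
               \<and> (\<forall>g\<in>Vsp D. \<bar>Apair D \<sigma> f h g\<bar> \<le> C3 * (normV D h + 1) * normV D g)))"
proof -
  have Do: "open D" by (rule D(1))
  interpret S: sig_ass \<sigma> cm cp
    by unfold_locales (use sig(2) V(6) sig(4) V(5) in auto)
  define L where "L = 2 * cp"
  have lip: "\<And>u v. norm (vgrad \<sigma> u - vgrad \<sigma> v) \<le> L * norm (u - v)"
    using S.lip by (simp add: L_def)
  have L: "L > 0" using V(6) by (simp add: L_def)
  have mon: "\<And>u v. cm * (norm (u - v))\<^sup>2 \<le> (vgrad \<sigma> u - vgrad \<sigma> v) \<bullet> (u - v)"
    using sig(4) by blast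
  have fin: "integrable (lebesgue_on D) (\<lambda>_. 1::real)"
  proof -
    have "D \<in> lmeasurable" by (rule bounded_set_imp_lmeasurable[OF D(2) D_sets[OF Do]])
    then have "integrable lebesgue (indicator D :: _ \<Rightarrow> real)" by (simp add: lmeasurable_iff_integrable)
    then show ?thesis by (simp add: integrable_restrict_space[OF D_sets'[OF Do]])
  qed
  obtain R where R: "R > 0" "D \<subseteq> ball 0 R" using bounded_subset_ballD[OF D(2)] by blast
  have VH: "\<And>h. h \<in> Vsp D \<Longrightarrow> H10 D h" by (simp add: Vsp_def)
  have P1: "\<forall>h1\<in>Vsp D. \<forall>h2\<in>Vsp D.
            Apair D \<sigma> f h1 (\<lambda>x. h1 x - h2 x) - Apair D \<sigma> f h2 (\<lambda>x. h1 x - h2 x) \<le> 0"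
    using part1[OF Do sig(3) lip fin f V(5) mon] VH by blast
  have P2: "\<forall>h\<in>Vsp D. \<forall>hs. (\<forall>n. hs n \<in> Vsp D) \<and> (\<lambda>n. normV D (\<lambda>x. hs n x - h x)) \<longlonglongrightarrow> 0
            \<longrightarrow> (\<forall>g\<in>Vsp D. (\<lambda>n. Apair D \<sigma> f (hs n) g) \<longlonglongrightarrow> Apair D \<sigma> f h g)"
  proof (intro ballI allI impI)
    fix h hs g assume h: "h \<in> Vsp D" and a: "(\<forall>n. hs n \<in> Vsp D) \<and> (\<lambda>n. normV D (\<lambda>x. hs n x - h x)) \<longlonglongrightarrow> 0"
      and g: "g \<in> Vsp D"
    show "(\<lambda>n. Apair D \<sigma> f (hs n) g) \<longlonglongrightarrow> Apair D \<sigma> f h g"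
      by (rule part2[OF Do sig(3) lip fin f VH[OF h] _ VH[OF g]]) (use a VH in auto)
  qed
  obtain C1 C2 C3 where C: "C1 > 0" "C2 > 0" "C3 > 0"
    "\<forall>h. H10 D h \<longrightarrow> Apair D \<sigma> f h h \<le> - C1 * (normV D h)\<^sup>2 + C2
               \<and> (\<forall>g. H10 D g \<longrightarrow> \<bar>Apair D \<sigma> f h g\<bar> \<le> C3 * (normV D h + 1) * normV D g)"
    using part3[OF Do sig(3) lip L fin f V(5) mon R] by blast
  have P3: "\<exists>C1 C2 C3. C1 > 0 \<and> C2 > 0 \<and> C3 > 0 \<and>
            (\<forall>h\<in>Vsp D. Apair D \<sigma> f h h \<le> - C1 * (normV D h)\<^sup>2 + C2
               \<and> (\<forall>g\<in>Vsp D. \<bar>Apair D \<sigma> f h g\<bar> \<le> C3 * (normV D h + 1) * normV D g))"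
    using C VH by blast
  show ?thesis using P1 P2 P3 by blast
qed

end
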